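(* Let $f$, $X_n$, $X$, $Y_m$, $Y$ be as in the context, and let $n\geq 2$ (equivalently $f(n)\geq 2$). Then every coarse $(f(n)-1)$-wiring of $X_n$ into $Y$ has volume at least $2\cdot 2^{2^{2n+1}}+1$. Consequently \[ \mathrm{wir}^{f(n)-1}_{X\to Y}\big(|VX_n|\big)\;\geq\; 2^{2^{2n+1}}\;\geq\;\left(\frac{|VX_n|}{f(n)(f(n)+1)}\right)^2, \] where $|VX_n|=(2^{2^{2n}}f(n)+1)f(n)$.
   Context: Fix a function $f:\mathbb{N}\to\mathbb{N}$ (with $\mathbb{N}=\{1,2,\dots\}$) that is surjective, satisfies $f(1)=1$, $2\leq f(n)\leq n$ for all $n\geq 2$, and $|f^{-1}(k)|=\infty$ for every $k\geq 2$. For $n\in\mathbb{N}$ let $X_n$ be the graph with vertex set $\{0,1,\dots,f(n)-1\}\times\{0,1,\dots,2^{2^{2n}}f(n)\}$, with edges $(i,j)(i,j+1)$ for all $0\leq i\leq f(n)-1$, $0\leq j\leq 2^{2^{2n}}f(n)-1$ ("vertical" edges), and $(i,j)(i+1,j)$ for all $0\leq i\leq f(n)-2$ and all $j$ that are multiples of $2^{2^{2n}}$ (including $0$) ("horizontal" edges). Let $Y_n$ be defined in the same way with $2^{2^{2n}}$ replaced everywhere by $2^{2^{2n+1}}$: vertex set $\{0,\dots,f(n)-1\}\times\{0,\dots,2^{2^{2n+1}}f(n)\}$, vertical edges $(i,j)(i,j+1)$, horizontal edges $(i,j)(i+1,j)$ for $j$ a multiple of $2^{2^{2n+1}}$. Let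 $X=\bigsqcup_{n\geq1}X_n$ and $Y=\bigsqcup_{n\geq 1}Y_n$ (disjoint unions). A wiring of a finite graph $\Gamma$ into a graph $Y$ is a continuous map $g:\Gamma\to Y$ sending vertices to vertices and each edge onto a union of edges (a path between the images of its endpoints, or a single vertex if these coincide). It is a coarse $k$-wiring if each vertex of $Y$ has at most $k$ preimage vertices and each edge of $Y$ is contained in the images of at most $k$ edges of $\Gamma$. Its volume is the number of vertices in its image. $\mathrm{wir}^k(\Gamma\to Y)$ is the minimal volume of a coarse $k$-wiring ($+\infty$ if none), and $\mathrm{wir}^k_{X\to Y}(n)=\max\{\mathrm{wir}^k(\Gamma\to Y):\Gamma\subseteq X,\ |V\Gamma|\leq n\}$. *)

theory Defs
  imports Complex_Main "HOL-Library.Extended_Nat"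
begin

type_synonym 'v graph = "'v set \<times> 'v set set"

definition verts :: "'v graph \<Rightarrow> 'v set" where "verts G = fst G"
definition edges :: "'v graph \<Rightarrow> 'v set set" where "edges G = snd G"

text \<open>The ladder-like graph with f(n) columns of height L*f(n), and horizontal rungs
  at heights that are multiples of L.\<close>
definition ladder :: "(nat \<Rightarrow> nat) \<Rightarrow> nat \<Rightarrow> nat \<Rightarrow> (nat \<times> nat) graph" where
  "ladder f L n =
    ({(i, j). i < f n \<and> j \<le> L * f n},
     {{(i, j), (i, j + 1)} | i j. i < f n \<and> j < L * f n} \<union>
     {{(i, j), (i + 1, j)} | i j. i + 1 < f n \<and> j \<le> L * f n \<and> L dvd j})"

definition Xn :: "(nat \<Rightarrow> nat) \<Rightarrow> nat \<Rightarrow> (nat \<times> nat) graph" where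
  "Xn f n = ladder f (2 ^ 2 ^ (2 * n)) n"

definition Yn :: "(nat \<Rightarrow> nat) \<Rightarrow> nat \<Rightarrow> (nat \<times> nat) graph" where
  "Yn f n = ladder f (2 ^ 2 ^ (2 * n + 1)) n"

definition dunion :: "(nat \<Rightarrow> 'v graph) \<Rightarrow> (nat \<times> 'v) graph" where
  "dunion G = ({(n, v) | n v. 1 \<le> n \<and> v \<in> verts (G n)},
               {(\<lambda>v. (n, v)) ` e | n e. 1 \<le> n \<and> e \<in> edges (G n)})"

definition Xg :: "(nat \<Rightarrow> nat) \<Rightarrow> (nat \<times> nat \<times> nat) graph" where
  "Xg f = dunion (Xn f)"

definition Yg :: "(nat \<Rightarrow> nat) \<Rightarrow> (nat \<times> nat \<times> nat) graph" where
  "Yg f = dunion (Yn f)"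

definition path_edges :: "'v list \<Rightarrow> 'v set set" where
  "path_edges xs = {{xs ! i, xs ! Suc i} | i. Suc i < length xs}"

definition is_path :: "'v graph \<Rightarrow> 'v list \<Rightarrow> bool" where
  "is_path G xs \<longleftrightarrow> xs \<noteq> [] \<and> distinct xs \<and> set xs \<subseteq> verts G \<and> path_edges xs \<subseteq> edges G"

text \<open>A wiring: a vertex map \<phi> and, for each edge e, a path P e in the target joining the
  images of the endpoints of e (a single vertex if they coincide).\<close>
definition wiring :: "'a graph \<Rightarrow> 'b graph \<Rightarrow> ('a \<Rightarrow> 'b) \<Rightarrow> ('a set \<Rightarrow> 'b list) \<Rightarrow> bool" where
  "wiring \<Gamma> G \<phi> P \<longleftrightarrow>
     (\<forall>v\<in>verts \<Gamma>. \<phi> v \<in> verts G) \<and>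
     (\<forall>e\<in>edges \<Gamma>. is_path G (P e) \<and> {hd (P e), last (P e)} = \<phi> ` e)"

definition coarse_wiring :: "nat \<Rightarrow> 'a graph \<Rightarrow> 'b graph \<Rightarrow> ('a \<Rightarrow> 'b) \<Rightarrow> ('a set \<Rightarrow> 'b list) \<Rightarrow> bool" where
  "coarse_wiring k \<Gamma> G \<phi> P \<longleftrightarrow> wiring \<Gamma> G \<phi> P \<and>
     (\<forall>y\<in>verts G. card {v \<in> verts \<Gamma>. \<phi> v = y} \<le> k) \<and>
     (\<forall>\<epsilon>\<in>edges G. card {e \<in> edges \<Gamma>. \<epsilon> \<in> path_edges (P e)} \<le> k)"

definition wiring_volume :: "'a graph \<Rightarrow> ('a \<Rightarrow> 'b) \<Rightarrow> ('a set \<Rightarrow> 'b list) \<Rightarrow> nat" where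
  "wiring_volume \<Gamma> \<phi> P = card (\<phi> ` verts \<Gamma> \<union> (\<Union>e\<in>edges \<Gamma>. set (P e)))"

definition wir :: "nat \<Rightarrow> 'a graph \<Rightarrow> 'b graph \<Rightarrow> enat" where
  "wir k \<Gamma> G = (INF w \<in> {(\<phi>, P). coarse_wiring k \<Gamma> G \<phi> P}. enat (wiring_volume \<Gamma> (fst w) (snd w)))"

definition subgraph :: "'v graph \<Rightarrow> 'v graph \<Rightarrow> bool" where
  "subgraph \<Gamma> G \<longleftrightarrow> verts \<Gamma> \<subseteq> verts G \<and> edges \<Gamma> \<subseteq> edges G \<and> (\<forall>e\<in>edges \<Gamma>. e \<subseteq> verts \<Gamma>)"

definition wir_fun :: "nat \<Rightarrow> 'a graph \<Rightarrow> 'b graph \<Rightarrow> nat \<Rightarrow> enat" where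
  "wir_fun k X Y m = (SUP \<Gamma> \<in> {\<Gamma>. subgraph \<Gamma> X \<and> finite (verts \<Gamma>) \<and> card (verts \<Gamma>) \<le> m}. wir k \<Gamma> Y)"

end

theory Submission
  imports Defs
begin

lemma ivt_nat:
  fixes p :: "nat \<Rightarrow> bool"
  assumes "a \<le> b" "p a \<noteq> p b"
  shows "\<exists>x. a \<le> x \<and> x < b \<and> p x \<noteq> p (Suc x)"
  using assms
proof (induction b)
  case 0 then show ?case by simp
next
  case (Suc b)
  show ?case
  proof (cases "a \<le> b \<and> p a \<noteq> p b")
    case True with Suc.IH obtain x where "a \<le> x" "x < b" "p x \<noteq> p (Suc x)" by blast
    then show ?thesis by (intro exI[of _ x]) auto
  next
    case False
    then show ?thesis using Suc.prems by (metis le_SucE lessI)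
  qed
qed

lemma ivt_nat2:
  fixes p :: "nat \<Rightarrow> bool"
  assumes "p a \<noteq> p b"
  shows "\<exists>x. min a b \<le> x \<and> x < max a b \<and> p x \<noteq> p (Suc x)"
proof (cases "a \<le> b")
  case True then show ?thesis using ivt_nat[of a b p] assms by auto
next
  case False then show ?thesis using ivt_nat[of b a p] assms by auto
qed

definition LV :: "nat \<Rightarrow> nat \<Rightarrow> (nat \<times> nat) set" where
  "LV F L = {(i, j). i < F \<and> j \<le> L * F}"
definition LE :: "nat \<Rightarrow> nat \<Rightarrow> (nat \<times> nat) set set" where
  "LE F L = {{(i, j), (i, j + 1)} | i j. i < F \<and> j < L * F} \<union>
     {{(i, j), (i + 1, j)} | i j. i + 1 < F \<and> j \<le> L * F \<and> L dvd j}"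

lemma ladder_eq: "ladder f L n = (LV (f n) L, LE (f n) L)"
  by (simp add: ladder_def LV_def LE_def)

lemma finite_LV: "finite (LV F L)"
proof -
  have "LV F L \<subseteq> {..<F} \<times> {..L*F}" by (auto simp: LV_def)
  then show ?thesis by (rule finite_subset) auto
qed

lemma LE_sub: "e \<in> LE F L \<Longrightarrow> e \<subseteq> LV F L"
  by (auto simp: LE_def LV_def)

lemma finite_LE: "finite (LE F L)"
proof -
  have "LE F L \<subseteq> Pow (LV F L)" using LE_sub by blast
  then show ?thesis using finite_LV by (meson finite_Pow_iff finite_subset)
qed

definition cutE :: "'v set set \<Rightarrow> 'v set \<Rightarrow> 'v set set" where
  "cutE E S = {e \<in> E. \<exists>x\<in>e. \<exists>y\<in>e. x \<in> S \<and> y \<notin> S}"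

definition Vset :: "nat \<Rightarrow> nat \<Rightarrow> (nat \<times> nat) set \<Rightarrow> (nat \<times> nat) set" where
  "Vset F L S = {(c, h). c < F \<and> h < L * F \<and> ((c, h) \<in> S) \<noteq> ((c, Suc h) \<in> S)}"
definition Hset :: "nat \<Rightarrow> nat \<Rightarrow> (nat \<times> nat) set \<Rightarrow> (nat \<times> nat) set" where
  "Hset F L S = {(c, k). Suc c < F \<and> k \<le> F \<and> ((c, k * L) \<in> S) \<noteq> ((Suc c, k * L) \<in> S)}"

lemma finite_Vset: "finite (Vset F L S)"
proof -
  have "Vset F L S \<subseteq> {..<F} \<times> {..<L*F}" by (auto simp: Vset_def)
  then show ?thesis by (rule finite_subset) auto
qed

lemma finite_Hset: "finite (Hset F L S)"
proof -
  have "Hset F L S \<subseteq> {..<F} \<times> {..F}" by (auto simp: Hset_def)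
  then show ?thesis by (rule finite_subset) auto
qed

lemma cut_ge:
  assumes L: "L \<ge> 1"
  shows "card (Vset F L S) + card (Hset F L S) \<le> card (cutE (LE F L) S)"
proof -
  define gv where "gv = (\<lambda>(c::nat, h::nat). {(c, h), (c, Suc h)})"
  define gh where "gh = (\<lambda>(c::nat, k::nat). {(c, k * L), (Suc c, k * L)})"
  have injv: "inj_on gv (Vset F L S)"
    unfolding inj_on_def gv_def by (clarsimp simp: doubleton_eq_iff)
  have injh: "inj_on gh (Hset F L S)"
    using L unfolding inj_on_def gh_def by (clarsimp simp: doubleton_eq_iff)
  have disj: "gv ` Vset F L S \<inter> gh ` Hset F L S = {}"
    unfolding gv_def gh_def by (force simp: doubleton_eq_iff)
  have sub: "gv ` Vset F L S \<union> gh ` Hset F L S \<subseteq> cutE (LE F L) S"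
  proof
    fix e assume "e \<in> gv ` Vset F L S \<union> gh ` Hset F L S"
    then show "e \<in> cutE (LE F L) S"
    proof
      assume "e \<in> gv ` Vset F L S"
      then obtain c h where ch: "(c, h) \<in> Vset F L S" "e = {(c, h), (c, Suc h)}"
        by (auto simp: gv_def)
      then have "{(c, h), (c, h + 1)} \<in> {{(i, j), (i, j + 1)} | i j. i < F \<and> j < L * F}"
        unfolding Vset_def by fastforce
      then have "e \<in> LE F L" using ch(2) by (simp add: LE_def)
      with ch show ?thesis unfolding cutE_def Vset_def by auto
    next
      assume "e \<in> gh ` Hset F L S"
      then obtain c k where ck: "(c, k) \<in> Hset F L S" "e = {(c, k * L), (Suc c, k * L)}"
        by (auto simp: gh_def)
      then have "k * L \<le> L * F" by (auto simp: Hset_def)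
      then have "{(c, k * L), (c + 1, k * L)} \<in> {{(i, j), (i + 1, j)} | i j. i + 1 < F \<and> j \<le> L * F \<and> L dvd j}"
        using ck(1) unfolding Hset_def by fastforce
      then have "e \<in> LE F L" using ck(2) by (simp add: LE_def)
      with ck show ?thesis unfolding cutE_def Hset_def by auto
    qed
  qed
  have fc: "finite (cutE (LE F L) S)"
    using finite_LE by (auto simp: cutE_def)
  have "card (Vset F L S) + card (Hset F L S) = card (gv ` Vset F L S \<union> gh ` Hset F L S)"
    using card_Un_disjoint[OF finite_imageI[OF finite_Vset] finite_imageI[OF finite_Hset] disj]
      card_image[OF injv] card_image[OF injh] by simp
  also have "\<dots> \<le> card (cutE (LE F L) S)" using card_mono[OF fc sub] .
  finally show ?thesis .
qed


lemma full_col_row: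
  assumes L: "L \<ge> 1" and cut: "card (cutE (LE F L) S) < F"
    and c0: "c0 < F" and full: "\<forall>h\<le>L*F. (c0, h) \<in> S"
  shows "\<exists>k\<le>F. \<forall>c<F. (c, k * L) \<in> S"
proof (rule ccontr)
  assume "\<not> ?thesis"
  then have nr: "\<forall>k\<le>F. \<exists>c<F. (c, k * L) \<notin> S" by blast
  have "{..F} \<subseteq> snd ` Hset F L S"
  proof
    fix k assume "k \<in> {..F}"
    then have k: "k \<le> F" by simp
    with nr obtain c where c: "c < F" "(c, k * L) \<notin> S" by blast
    have "k * L \<le> L * F" using k by (simp add: mult.commute)
    with full have "(c0, k * L) \<in> S" by blast
    with c obtain x where x: "min c c0 \<le> x" "x < max c c0" "((x, k*L) \<in> S) \<noteq> ((Suc x, k*L) \<in> S)"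
      using ivt_nat2[of "\<lambda>x. (x, k*L) \<in> S" c c0] by auto
    have "Suc x < F" using x(2) c(1) c0 by simp
    then have "(x, k) \<in> Hset F L S" using x(3) k by (simp add: Hset_def)
    then show "k \<in> snd ` Hset F L S" by force
  qed
  then have "card {..F} \<le> card (snd ` Hset F L S)"
    by (intro card_mono finite_imageI finite_Hset)
  also have "\<dots> \<le> card (Hset F L S)" by (rule card_image_le[OF finite_Hset])
  also have "\<dots> \<le> card (cutE (LE F L) S)" using cut_ge[OF L, of F S] by simp
  finally show False using cut by simp
qed

lemma four_ab: "4 * a * b \<le> ((a::nat) + b)^2"
proof -
  have "(int a - int b)^2 \<ge> 0" by simp
  then have "4 * int a * int b \<le> (int a + int b)^2" by (simp add: power2_eq_square algebra_simps)
  then show ?thesis by (metis (mono_tags) of_nat_add of_nat_le_iff of_nat_mult of_nat_numeral of_nat_power)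
qed

lemma small_side:
  assumes L: "L \<ge> 1" and SV: "S \<subseteq> LV F L" and cut: "card (cutE (LE F L) S) < F"
    and nofull: "\<forall>c<F. \<exists>h\<le>L*F. (c, h) \<notin> S"
  shows "4 * card S \<le> L * F^2"
proof -
  define V where "V = card (Vset F L S)"
  define H where "H = card (Hset F L S)"
  have VH: "V + H < F" using cut_ge[OF L, of F S] cut unfolding V_def H_def by simp
  define Tc where "Tc = {c. c < F \<and> (\<exists>h. (c, h) \<in> S)}"
  have Tc_sub: "Tc \<subseteq> fst ` Vset F L S"
  proof
    fix c assume "c \<in> Tc"
    then obtain h where c: "c < F" "(c, h) \<in> S" by (auto simp: Tc_def)
    then have h: "h \<le> L * F" using SV by (auto simp: LV_def)
    obtain h' where h': "h' \<le> L*F" "(c, h') \<notin> S" using nofull c(1) by blast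
    obtain x where x: "min h h' \<le> x" "x < max h h'" "((c, x) \<in> S) \<noteq> ((c, Suc x) \<in> S)"
      using ivt_nat2[of "\<lambda>x. (c, x) \<in> S" h h'] c(2) h'(2) by auto
    have "x < L * F" using x(2) h h'(1) by simp
    then have "(c, x) \<in> Vset F L S" using x(3) c(1) by (simp add: Vset_def)
    then show "c \<in> fst ` Vset F L S" by force
  qed
  have cTc: "card Tc \<le> V"
    unfolding V_def using card_mono[OF finite_imageI[OF finite_Vset] Tc_sub] card_image_le[OF finite_Vset]
    by (meson le_trans)
  have norow: "\<forall>k\<le>F. \<exists>c<F. (c, k * L) \<notin> S"
  proof (rule ccontr)
    assume "\<not> ?thesis"
    then obtain k where k: "k \<le> F" "\<forall>c<F. (c, k * L) \<in> S" by blast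
    then have "{..<F} \<subseteq> Tc" by (auto simp: Tc_def)
    moreover have "finite Tc" by (simp add: Tc_def)
    ultimately have "card {..<F} \<le> card Tc" by (rule card_mono[rotated])
    then have "F \<le> card Tc" by simp
    then show False using cTc VH by simp
  qed
  define Tr where "Tr = {k. k \<le> F \<and> (\<exists>c. (c, k * L) \<in> S)}"
  have Tr_sub: "Tr \<subseteq> snd ` Hset F L S"
  proof
    fix k assume "k \<in> Tr"
    then obtain c where k: "k \<le> F" "(c, k * L) \<in> S" by (auto simp: Tr_def)
    then have c: "c < F" using SV by (auto simp: LV_def)
    obtain c' where c': "c' < F" "(c', k * L) \<notin> S" using norow k(1) by blast
    obtain x where x: "min c c' \<le> x" "x < max c c'" "((x, k*L) \<in> S) \<noteq> ((Suc x, k*L) \<in> S)"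
      using ivt_nat2[of "\<lambda>x. (x, k*L) \<in> S" c c'] k(2) c'(2) by auto
    have "Suc x < F" using x(2) c c'(1) by simp
    then have "(x, k) \<in> Hset F L S" using x(3) k(1) by (simp add: Hset_def)
    then show "k \<in> snd ` Hset F L S" by force
  qed
  have cTr: "card Tr \<le> H"
    unfolding H_def using card_mono[OF finite_imageI[OF finite_Hset] Tr_sub] card_image_le[OF finite_Hset]
    by (meson le_trans)
  define RS where "RS = {(c, k). c < F \<and> k \<le> F \<and> (c, k * L) \<in> S}"
  have RS_sub: "RS \<subseteq> Tc \<times> Tr" by (auto simp: RS_def Tc_def Tr_def)
  have fTc: "finite Tc" by (simp add: Tc_def)
  have fTr: "finite Tr" by (simp add: Tr_def)
  have fRS: "finite RS" using rev_finite_subset[OF finite_cartesian_product[OF fTc fTr] RS_sub] .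
  have cRS: "card RS \<le> V * H"
  proof -
    have "card RS \<le> card (Tc \<times> Tr)" using RS_sub fTc fTr by (intro card_mono) auto
    also have "\<dots> = card Tc * card Tr" by (rule card_cartesian_product)
    also have "\<dots> \<le> V * H" using cTc cTr by (rule mult_le_mono)
    finally show ?thesis .
  qed
  define Gap where "Gap = (\<lambda>c g. (\<lambda>d. (c::nat, g * L + d)) ` {1..<L})"
  have cGap: "card (Gap c g) \<le> L - 1" for c g
    unfolding Gap_def using card_image_le[of "{1..<L}"] by simp
  have fGap: "finite (Gap c g)" for c g unfolding Gap_def by simp
  define Row where "Row = (\<lambda>(c, k). (c, k * L)) ` RS"
  have Ssub: "S \<subseteq> Row \<union> (\<Union>p\<in>Vset F L S. Gap (fst p) (snd p div L)) \<union> (\<Union>q\<in>RS. Gap (fst q) (snd q))"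
  proof
    fix x assume xS: "x \<in> S"
    obtain c h where x: "x = (c, h)" by (cases x)
    have ch: "c < F" "h \<le> L * F" using xS SV x by (auto simp: LV_def)
    show "x \<in> Row \<union> (\<Union>p\<in>Vset F L S. Gap (fst p) (snd p div L)) \<union> (\<Union>q\<in>RS. Gap (fst q) (snd q))"
    proof (cases "L dvd h")
      case True
      then obtain k where k: "h = k * L" by (metis dvd_def mult.commute)
      have "k \<le> F" using ch(2) k L by (simp add: mult.commute)
      then have "(c, k) \<in> RS" using xS x k ch(1) by (simp add: RS_def)
      then have "x \<in> Row" unfolding Row_def using x k by force
      then show ?thesis by blast
    next
      case False
      define g where "g = h div L"
      define d where "d = h mod L"
      have hd: "h = g * L + d" unfolding g_def d_def by simp
      have d: "0 < d" "d < L" using False L unfolding d_def by (auto simp: dvd_eq_mod_eq_0)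
      have gF: "g < F"
      proof (rule ccontr)
        assume "\<not> g < F"
        then have "F * L \<le> g * L" by simp
        moreover have "h \<le> F * L" using ch(2) by (simp add: mult.commute)
        ultimately show False using hd d by linarith
      qed
      have xg: "x \<in> Gap c g" unfolding Gap_def using x hd d by force
      show ?thesis
      proof (cases "\<exists>h0. g * L \<le> h0 \<and> h0 < g * L + L \<and> (c, h0) \<in> Vset F L S")
        case True
        then obtain h0 where h0: "g * L \<le> h0" "h0 < g * L + L" "(c, h0) \<in> Vset F L S" by blast
        have "h0 div L = g" using h0(1,2) by (intro div_nat_eqI) (auto simp: algebra_simps)
        then have "x \<in> Gap (fst (c, h0)) (snd (c, h0) div L)" using xg by simp
        then show ?thesis using h0(3) by blast
      next
        case False
        have "(c, g * L) \<in> S"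
        proof (rule ccontr)
          assume nS: "(c, g * L) \<notin> S"
          have "g * L \<le> h" using hd by simp
          then obtain y where y: "g * L \<le> y" "y < h" "((c, y) \<in> S) \<noteq> ((c, Suc y) \<in> S)"
            using ivt_nat[of "g*L" h "\<lambda>y. (c, y) \<in> S"] nS xS x by auto
          have "y < L * F" using y(2) ch(2) by simp
          then have "(c, y) \<in> Vset F L S" using y(3) ch(1) by (simp add: Vset_def)
          moreover have "y < g * L + L" using y(2) hd d by simp
          ultimately show False using False y(1) by blast
        qed
        then have "(c, g) \<in> RS" using gF ch(1) by (simp add: RS_def)
        then show ?thesis using xg by force
      qed
    qed
  qed
  have fin1: "finite (\<Union>p\<in>Vset F L S. Gap (fst p) (snd p div L))" by (intro finite_UN_I finite_Vset fGap)
  have fin2: "finite (\<Union>q\<in>RS. Gap (fst q) (snd q))" by (intro finite_UN_I fRS fGap)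
  have fRow: "finite Row" unfolding Row_def using fRS by simp
  have c1: "card (\<Union>p\<in>Vset F L S. Gap (fst p) (snd p div L)) \<le> V * (L - 1)"
  proof -
    have "card (\<Union>p\<in>Vset F L S. Gap (fst p) (snd p div L)) \<le> (\<Sum>p\<in>Vset F L S. card (Gap (fst p) (snd p div L)))"
      by (rule card_UN_le[OF finite_Vset])
    also have "\<dots> \<le> (\<Sum>p\<in>Vset F L S. L - 1)" by (intro sum_mono cGap)
    finally show ?thesis unfolding V_def by simp
  qed
  have c2: "card (\<Union>q\<in>RS. Gap (fst q) (snd q)) \<le> card RS * (L - 1)"
  proof -
    have "card (\<Union>q\<in>RS. Gap (fst q) (snd q)) \<le> (\<Sum>q\<in>RS. card (Gap (fst q) (snd q)))"
      by (rule card_UN_le[OF fRS])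
    also have "\<dots> \<le> (\<Sum>q\<in>RS. L - 1)" by (intro sum_mono cGap)
    finally show ?thesis by simp
  qed
  have cRow: "card Row \<le> card RS" unfolding Row_def by (rule card_image_le[OF fRS])
  have "card S \<le> card (Row \<union> (\<Union>p\<in>Vset F L S. Gap (fst p) (snd p div L)) \<union> (\<Union>q\<in>RS. Gap (fst q) (snd q)))"
    using Ssub fin1 fin2 fRow by (intro card_mono) auto
  also have "\<dots> \<le> card Row + card (\<Union>p\<in>Vset F L S. Gap (fst p) (snd p div L)) + card (\<Union>q\<in>RS. Gap (fst q) (snd q))"
    by (meson add_le_mono card_Un_le le_trans order_refl)
  also have "\<dots> \<le> card RS + V * (L - 1) + card RS * (L - 1)" using cRow c1 c2 by simp
  also have "\<dots> = card RS * L + V * (L - 1)"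
  proof -
    obtain L' where "L = Suc L'" using L by (cases L) auto
    then show ?thesis by (simp add: algebra_simps)
  qed
  also have "\<dots> \<le> V * H * L + V * L" using cRS by (intro add_mono mult_le_mono) auto
  finally have cS: "card S \<le> L * (V * (H + 1))" by (simp add: algebra_simps)
  have "4 * (V * (H + 1)) \<le> (V + (H + 1))^2" using four_ab[of V "H+1"] by simp
  also have "\<dots> \<le> F^2" using VH by (intro power_mono) auto
  finally have "4 * (V * (H + 1)) \<le> F^2" .
  then have "L * (4 * (V * (H + 1))) \<le> L * F^2" by simp
  then show ?thesis using cS by (metis (no_types, lifting) le_trans mult.left_commute mult_le_mono2)
qed


definition YM :: "nat \<Rightarrow> nat" where "YM m = 2 ^ 2 ^ (2 * m + 1)"

lemma YM_pos: "YM m > 0" by (simp add: YM_def)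

lemma Yn_eq: "Yn f m = (LV (f m) (YM m), LE (f m) (YM m))"
  by (simp add: Yn_def ladder_eq YM_def)

lemma Yg_verts: "(m, c, h) \<in> verts (Yg f) \<longleftrightarrow> 1 \<le> m \<and> c < f m \<and> h \<le> YM m * f m"
  by (auto simp: Yg_def dunion_def verts_def Yn_eq LV_def)

lemma Yg_edges: "e \<in> edges (Yg f) \<longleftrightarrow> (\<exists>m e0. 1 \<le> m \<and> e0 \<in> LE (f m) (YM m) \<and> e = (\<lambda>v. (m, v)) ` e0)"
  by (auto simp: Yg_def dunion_def edges_def Yn_eq)

lemma ystep:
  assumes "{(m, c, h), (m', c', h')} \<in> edges (Yg f)"
  shows "m' = m \<and> 1 \<le> m \<and> c < f m \<and> c' < f m \<and> h \<le> YM m * f m \<and> h' \<le> YM m * f m \<and>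
    ((c' = c \<and> (h' = Suc h \<or> h = Suc h')) \<or> (h' = h \<and> YM m dvd h \<and> (c' = Suc c \<or> c = Suc c')))"
proof -
  obtain m0 e0 where me: "1 \<le> m0" "e0 \<in> LE (f m0) (YM m0)" "{(m, c, h), (m', c', h')} = (\<lambda>v. (m0, v)) ` e0"
    using assms[unfolded Yg_edges] by blast
  have "e0 \<in> {{(i, j), (i, j + 1)} | i j. i < f m0 \<and> j < YM m0 * f m0} \<or>
        e0 \<in> {{(i, j), (i + 1, j)} | i j. i + 1 < f m0 \<and> j \<le> YM m0 * f m0 \<and> YM m0 dvd j}"
    using me(2) unfolding LE_def by (rule UnE) simp_all
  then show ?thesis
  proof
    assume "e0 \<in> {{(i, j), (i, j + 1)} | i j. i < f m0 \<and> j < YM m0 * f m0}"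
    then obtain i j where v: "e0 = {(i, j), (i, j + 1)}" "i < f m0" "j < YM m0 * f m0" by blast
    then have "{(m, c, h), (m', c', h')} = {(m0, i, j), (m0, i, Suc j)}" using me(3) by simp
    then have "((m, c, h) = (m0, i, j) \<and> (m', c', h') = (m0, i, Suc j)) \<or> ((m, c, h) = (m0, i, Suc j) \<and> (m', c', h') = (m0, i, j))"
      by (simp add: doubleton_eq_iff)
    then show ?thesis using v me(1) by (elim disjE) auto
  next
    assume "e0 \<in> {{(i, j), (i + 1, j)} | i j. i + 1 < f m0 \<and> j \<le> YM m0 * f m0 \<and> YM m0 dvd j}"
    then obtain i j where hz: "e0 = {(i, j), (i + 1, j)}" "i + 1 < f m0" "j \<le> YM m0 * f m0" "YM m0 dvd j" by blast
    then have "{(m, c, h), (m', c', h')} = {(m0, i, j), (m0, Suc i, j)}" using me(3) by simp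
    then have "((m, c, h) = (m0, i, j) \<and> (m', c', h') = (m0, Suc i, j)) \<or> ((m, c, h) = (m0, Suc i, j) \<and> (m', c', h') = (m0, i, j))"
      by (simp add: doubleton_eq_iff)
    then show ?thesis using hz me(1) by (elim disjE) auto
  qed
qed

lemma yedge_verts:
  assumes "e \<in> edges (Yg f)" shows "e \<subseteq> verts (Yg f)"
proof -
  obtain m e0 where me: "1 \<le> m" "e0 \<in> LE (f m) (YM m)" "e = (\<lambda>v. (m, v)) ` e0"
    using assms[unfolded Yg_edges] by blast
  have "e0 \<subseteq> LV (f m) (YM m)" using me(2) by (rule LE_sub)
  then show ?thesis using me by (auto simp: Yg_verts LV_def)
qed

lemma yedge_two:
  assumes "{x, y} \<in> edges (Yg f)" shows "x \<noteq> y"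
proof -
  obtain m c h m' c' h' where "x = (m, c, h)" "y = (m', c', h')" by (cases x, cases y) auto
  then show ?thesis using ystep[of m c h m' c' h' f] assms by auto
qed


definition Ar :: "(nat \<Rightarrow> nat) \<Rightarrow> (nat \<times> nat \<times> nat) set \<Rightarrow> nat \<times> nat \<times> nat \<Rightarrow> nat \<times> nat \<times> nat \<Rightarrow> ((nat \<times> nat \<times> nat) \<times> (nat \<times> nat \<times> nat)) set" where
  "Ar f W a b = {(x, y). x \<in> W \<and> y \<in> W \<and> {x, y} \<in> edges (Yg f) \<and> {x, y} \<noteq> {a, b}}"

lemma closed_rt:
  assumes "(a, b) \<in> R\<^sup>*" "a \<in> D" "\<And>x y. (x, y) \<in> R \<Longrightarrow> x \<in> D \<Longrightarrow> y \<in> D"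
  shows "b \<in> D"
  using assms(1)
proof (induction rule: rtrancl_induct)
  case base show ?case by (rule assms(2))
next
  case (step y z) show ?case by (rule assms(3)[OF step(2) step(3)])
qed

lemma Ar_sym: "(x, y) \<in> Ar f W a b \<Longrightarrow> (y, x) \<in> Ar f W a b"
  unfolding Ar_def by (simp add: insert_commute)

lemma Ar_conv: "(Ar f W a b)\<inverse> = Ar f W a b"
  by (auto dest: Ar_sym)

lemma Ar_swap: "Ar f W b a = Ar f W a b"
  by (simp add: Ar_def insert_commute)

lemma Ar_rev: "(a, b) \<in> (Ar f W x y)\<^sup>* \<Longrightarrow> (b, a) \<in> (Ar f W x y)\<^sup>*"
  using rtrancl_converseI[of a b "Ar f W x y"] Ar_conv[of f W x y] by simp

lemma Ar_step:
  assumes "(x, y) \<in> Ar f W a b" "x = (m, c, h)"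
  shows "\<exists>c' h'. y = (m, c', h') \<and> x \<in> W \<and> y \<in> W \<and> {x, y} \<noteq> {a, b} \<and>
     ((c' = c \<and> (h' = Suc h \<or> h = Suc h')) \<or> (h' = h \<and> YM m dvd h \<and> (c' = Suc c \<or> c = Suc c')))"
proof -
  obtain m' c' h' where y: "y = (m', c', h')" by (cases y) auto
  have e: "{(m, c, h), (m', c', h')} \<in> edges (Yg f)" using assms y by (simp add: Ar_def)
  have s: "m' = m \<and> ((c' = c \<and> (h' = Suc h \<or> h = Suc h')) \<or> (h' = h \<and> YM m dvd h \<and> (c' = Suc c \<or> c = Suc c')))"
    using ystep[OF e] by blast
  have w: "x \<in> W" "y \<in> W" "{x, y} \<noteq> {a, b}" using assms(1) by (auto simp: Ar_def)
  show ?thesis using s w y by blast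
qed

lemma dvd_between:
  fixes M h q :: nat
  assumes "0 < M" "M dvd h" "q * M < h" "h < q * M + M" shows False
proof -
  obtain k where k: "h = k * M" using assms(2) by (metis dvd_def mult.commute)
  have "q < k" using assms(3) k by simp
  moreover have "k * M < (Suc q) * M" using assms(4) k by simp
  then have "k < Suc q" using mult_less_cancel2[of k M "Suc q"] by simp
  ultimately show False by simp
qed

lemma dvd_le_div:
  fixes M h j :: nat
  assumes "0 < M" "M dvd h" "h \<le> j" shows "h \<le> j div M * M"
proof -
  obtain k where k: "h = k * M" using assms(2) by (metis dvd_def mult.commute)
  have "k \<le> j div M" using assms(1,3) k by (simp add: less_eq_div_iff_mult_less_eq)
  then show ?thesis using k by simp
qed

lemma dvd_gt_div:
  fixes M h j :: nat
  assumes "0 < M" "M dvd h" "j < h" shows "j div M * M + M \<le> h"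
proof -
  obtain k where k: "h = k * M" using assms(2) by (metis dvd_def mult.commute)
  have "\<not> k \<le> j div M"
  proof
    assume "k \<le> j div M"
    then have "h \<le> j div M * M" using k by simp
    also have "\<dots> \<le> j" by (simp add: div_times_less_eq_dividend)
    finally show False using assms(3) by simp
  qed
  then have "Suc (j div M) \<le> k" by simp
  then have "Suc (j div M) * M \<le> k * M" by (rule mult_le_mono1)
  then show ?thesis using k by simp
qed

lemma dvd_two_lt:
  fixes M h r :: nat
  assumes "0 < M" "M dvd h" "M dvd r" "h < r + M" shows "h \<le> r"
proof -
  obtain k where k: "h = k * M" using assms(2) by (metis dvd_def mult.commute)
  obtain q where q: "r = q * M" using assms(3) by (metis dvd_def mult.commute)
  have "k * M < Suc q * M" using assms(4) k q by simp
  then have "k \<le> q" using mult_less_cancel2[of k M "Suc q"] by simp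
  then show ?thesis using k q by simp
qed

lemma dvd_two_lt2:
  fixes M h r :: nat
  assumes "0 < M" "M dvd h" "M dvd r" "h < r" shows "h + M \<le> r"
proof -
  obtain k where k: "h = k * M" using assms(2) by (metis dvd_def mult.commute)
  obtain q where q: "r = q * M" using assms(3) by (metis dvd_def mult.commute)
  have "k < q" using assms(4) k q by simp
  then have "Suc k * M \<le> q * M" by (intro mult_le_mono1) simp
  then show ?thesis using k q by simp
qed

lemma count_heights:
  fixes M :: nat
  assumes fW: "finite W" and H: "\<forall>h. lo \<le> h \<longrightarrow> h \<le> lo + M \<longrightarrow> (\<exists>c'. P c' \<and> (m, c', h) \<in> W)"
  shows "M + 1 \<le> card {x \<in> W. P (fst (snd x))}"
proof -
  have "\<forall>h. \<exists>c'. lo \<le> h \<and> h \<le> lo + M \<longrightarrow> P c' \<and> (m, c', h) \<in> W" using H by blast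
  from choice[OF this] obtain g where g: "\<forall>h. lo \<le> h \<and> h \<le> lo + M \<longrightarrow> P (g h) \<and> (m, g h, h) \<in> W"
    by blast
  have inj: "inj_on (\<lambda>h. (m, g h, h)) {lo..lo+M}" by (auto simp: inj_on_def)
  have sub: "(\<lambda>h. (m, g h, h)) ` {lo..lo+M} \<subseteq> {x \<in> W. P (fst (snd x))}" using g by auto
  have "card {lo..lo+M} \<le> card {x \<in> W. P (fst (snd x))}"
    using card_inj_on_le[OF inj sub] fW by simp
  then show ?thesis by simp
qed

lemma count_two:
  fixes M :: nat
  assumes fW: "finite W" and disj: "\<And>c. \<not> (P c \<and> Q c)"
    and H1: "\<forall>h. lo1 \<le> h \<longrightarrow> h \<le> lo1 + M \<longrightarrow> (\<exists>c'. P c' \<and> (m, c', h) \<in> W)"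
    and H2: "\<forall>h. lo2 \<le> h \<longrightarrow> h \<le> lo2 + M \<longrightarrow> (\<exists>c'. Q c' \<and> (m, c', h) \<in> W)"
  shows "2 * M + 2 \<le> card W"
proof -
  have "card {x \<in> W. P (fst (snd x))} + card {x \<in> W. Q (fst (snd x))} =
        card ({x \<in> W. P (fst (snd x))} \<union> {x \<in> W. Q (fst (snd x))})"
    using fW disj by (intro card_Un_disjoint[symmetric]) auto
  also have "\<dots> \<le> card W" using fW by (intro card_mono) auto
  finally show ?thesis using count_heights[OF fW H1] count_heights[OF fW H2] by simp
qed


lemma vert_core:
  fixes m c j :: nat
  defines "M \<equiv> YM m"
  defines "r \<equiv> j div M * M"
  defines "a \<equiv> (m, c, j)" and "b \<equiv> (m, c, Suc j)"
  assumes fW: "finite W" and aW: "a \<in> W" and bW: "b \<in> W"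
    and walk: "(a, b) \<in> (Ar f W a b)\<^sup>*"
  shows "2 * M + 2 \<le> card W"
proof -
  let ?A = "Ar f W a b"
  have walk': "(b, a) \<in> ?A\<^sup>*" using Ar_rev[OF walk] .
  have M0: "0 < M" unfolding M_def by (rule YM_pos)
  have rj: "r \<le> j" unfolding r_def by (simp add: div_times_less_eq_dividend)
  have jr: "j < r + M" unfolding r_def using M0
    by (metis add.commute div_mult_mod_eq mod_less_divisor nat_add_left_cancel_less)
  have ndvd: "\<not> M dvd h" if "r < h" "h < r + M" for h
    using dvd_between[OF M0 _ that[unfolded r_def]] by blast
  have colA: "\<forall>h. r \<le> h \<longrightarrow> h \<le> r + M \<longrightarrow> (\<exists>c'. c' = c \<and> (m, c', h) \<in> W)"
  proof (intro allI impI, rule ccontr)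
    fix h0 assume h0: "r \<le> h0" "h0 \<le> r + M" "\<not> (\<exists>c'. c' = c \<and> (m, c', h0) \<in> W)"
    then have h0W: "(m, c, h0) \<notin> W" by blast
    show False
    proof (cases "h0 \<le> j")
      case True
      then have h0j: "h0 < j" using h0W aW unfolding a_def by (metis le_neq_implies_less)
      define D where "D = {x. \<exists>h'. x = (m, c, h') \<and> h0 < h' \<and> h' \<le> j}"
      have "b \<in> D"
      proof (rule closed_rt[OF walk])
        show "a \<in> D" unfolding D_def a_def using h0j by blast
      next
        fix x y assume xy: "(x, y) \<in> ?A" and xD: "x \<in> D"
        then obtain h' where x: "x = (m, c, h')" "h0 < h'" "h' \<le> j" unfolding D_def by blast
        obtain c' h'' where st: "y = (m, c', h'')" "y \<in> W" "{x, y} \<noteq> {a, b}"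
          "(c' = c \<and> (h'' = Suc h' \<or> h' = Suc h'')) \<or> (h'' = h' \<and> YM m dvd h' \<and> (c' = Suc c \<or> c = Suc c'))"
          using Ar_step[OF xy x(1)] by blast
        from st(4) show "y \<in> D"
        proof (elim disjE conjE)
          assume "c' = c" "h'' = Suc h'"
          moreover have "h' \<noteq> j" using st(3) x(1) st(1) \<open>c' = c\<close> \<open>h'' = Suc h'\<close> unfolding a_def b_def by auto
          ultimately show "y \<in> D" using x st(1) unfolding D_def by auto
        next
          assume "c' = c" "h' = Suc h''"
          moreover have "h'' \<noteq> h0" using st(1,2) h0W \<open>c' = c\<close> by auto
          ultimately show "y \<in> D" using x st(1) unfolding D_def by auto
        next
          assume "h'' = h'" "YM m dvd h'"
          then show "y \<in> D" using ndvd[of h'] x h0(1) jr unfolding M_def by simp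
        next
          assume "h'' = h'" "YM m dvd h'"
          then show "y \<in> D" using ndvd[of h'] x h0(1) jr unfolding M_def by simp
        qed
      qed
      then show False unfolding D_def b_def by simp
    next
      case False
      then have h0j: "Suc j < h0" using h0W bW unfolding b_def by (metis le_neq_implies_less not_less_eq_eq)
      define D where "D = {x. \<exists>h'. x = (m, c, h') \<and> Suc j \<le> h' \<and> h' < h0}"
      have "a \<in> D"
      proof (rule closed_rt[OF walk'])
        show "b \<in> D" unfolding D_def b_def using h0j by blast
      next
        fix x y assume xy: "(x, y) \<in> ?A" and xD: "x \<in> D"
        then obtain h' where x: "x = (m, c, h')" "Suc j \<le> h'" "h' < h0" unfolding D_def by blast
        obtain c' h'' where st: "y = (m, c', h'')" "y \<in> W" "{x, y} \<noteq> {a, b}"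
          "(c' = c \<and> (h'' = Suc h' \<or> h' = Suc h'')) \<or> (h'' = h' \<and> YM m dvd h' \<and> (c' = Suc c \<or> c = Suc c'))"
          using Ar_step[OF xy x(1)] by blast
        from st(4) show "y \<in> D"
        proof (elim disjE conjE)
          assume "c' = c" "h'' = Suc h'"
          moreover have "h'' \<noteq> h0" using st(1,2) h0W \<open>c' = c\<close> by auto
          ultimately show "y \<in> D" using x st(1) unfolding D_def by auto
        next
          assume "c' = c" "h' = Suc h''"
          moreover have "h' \<noteq> Suc j" using st(3) x(1) st(1) \<open>c' = c\<close> \<open>h' = Suc h''\<close> unfolding a_def b_def by auto
          ultimately show "y \<in> D" using x st(1) unfolding D_def by auto
        next
          assume "h'' = h'" "YM m dvd h'"
          then show "y \<in> D" using ndvd[of h'] x h0(2) rj unfolding M_def by simp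
        next
          assume "h'' = h'" "YM m dvd h'"
          then show "y \<in> D" using ndvd[of h'] x h0(2) rj unfolding M_def by simp
        qed
      qed
      then show False unfolding D_def a_def by simp
    qed
  qed
  have c1: "\<exists>c1. c1 \<noteq> c \<and> (\<forall>h. r \<le> h \<longrightarrow> h \<le> j \<longrightarrow> (m, c1, h) \<in> W)"
  proof (rule ccontr)
    assume "\<not> ?thesis"
    then have "\<forall>c1. \<exists>h. c1 \<noteq> c \<longrightarrow> r \<le> h \<and> h \<le> j \<and> (m, c1, h) \<notin> W" by blast
    then obtain hb where hb: "\<And>c1. c1 \<noteq> c \<Longrightarrow> r \<le> hb c1 \<and> hb c1 \<le> j \<and> (m, c1, hb c1) \<notin> W"
      by metis
    define D where "D = {x. \<exists>c' h'. x = (m, c', h') \<and> h' \<le> j \<and> (c' \<noteq> c \<longrightarrow> h' \<le> hb c')}"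
    have "b \<in> D"
    proof (rule closed_rt[OF walk])
      show "a \<in> D" unfolding D_def a_def by blast
    next
      fix x y assume xy: "(x, y) \<in> ?A" and xD: "x \<in> D"
      then obtain c0 h' where x: "x = (m, c0, h')" "h' \<le> j" "c0 \<noteq> c \<longrightarrow> h' \<le> hb c0" unfolding D_def by blast
      obtain c' h'' where st: "y = (m, c', h'')" "x \<in> W" "y \<in> W" "{x, y} \<noteq> {a, b}"
        "(c' = c0 \<and> (h'' = Suc h' \<or> h' = Suc h'')) \<or> (h'' = h' \<and> YM m dvd h' \<and> (c' = Suc c0 \<or> c0 = Suc c'))"
        using Ar_step[OF xy x(1)] by blast
      from st(5) show "y \<in> D"
      proof (elim disjE conjE)
        assume e: "c' = c0" "h'' = Suc h'"
        show "y \<in> D"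
        proof (cases "c0 = c")
          case True
          then have "h' \<noteq> j" using st(4) x(1) st(1) e unfolding a_def b_def by auto
          then show ?thesis using x st(1) e True unfolding D_def by auto
        next
          case False
          then have "h' \<noteq> hb c0" using st(2) x(1) hb[of c0] by auto
          then show ?thesis using x st(1) e False hb[of c0] unfolding D_def by auto
        qed
      next
        assume "c' = c0" "h' = Suc h''"
        then show "y \<in> D" using x st(1) unfolding D_def by auto
      next
        assume e: "h'' = h'" "YM m dvd h'"
        then have "h' \<le> r" using dvd_le_div[OF M0 _ x(2)] unfolding r_def M_def by simp
        then have "c' \<noteq> c \<longrightarrow> h' \<le> hb c'" using hb[of c'] by auto
        then show "y \<in> D" using x(2) st(1) e unfolding D_def by auto
      next
        assume e: "h'' = h'" "YM m dvd h'"
        then have "h' \<le> r" using dvd_le_div[OF M0 _ x(2)] unfolding r_def M_def by simp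
        then have "c' \<noteq> c \<longrightarrow> h' \<le> hb c'" using hb[of c'] by auto
        then show "y \<in> D" using x(2) st(1) e unfolding D_def by auto
      qed
    qed
    then show False unfolding D_def b_def by simp
  qed
  have c2: "\<exists>c2. c2 \<noteq> c \<and> (\<forall>h. Suc j \<le> h \<longrightarrow> h \<le> r + M \<longrightarrow> (m, c2, h) \<in> W)"
  proof (rule ccontr)
    assume "\<not> ?thesis"
    then have "\<forall>c1. \<exists>h. c1 \<noteq> c \<longrightarrow> Suc j \<le> h \<and> h \<le> r + M \<and> (m, c1, h) \<notin> W" by blast
    then obtain hb where hb: "\<And>c1. c1 \<noteq> c \<Longrightarrow> Suc j \<le> hb c1 \<and> hb c1 \<le> r + M \<and> (m, c1, hb c1) \<notin> W"
      by metis
    define D where "D = {x. \<exists>c' h'. x = (m, c', h') \<and> Suc j \<le> h' \<and> (c' \<noteq> c \<longrightarrow> hb c' \<le> h')}"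
    have "a \<in> D"
    proof (rule closed_rt[OF walk'])
      show "b \<in> D" unfolding D_def b_def by blast
    next
      fix x y assume xy: "(x, y) \<in> ?A" and xD: "x \<in> D"
      then obtain c0 h' where x: "x = (m, c0, h')" "Suc j \<le> h'" "c0 \<noteq> c \<longrightarrow> hb c0 \<le> h'" unfolding D_def by blast
      obtain c' h'' where st: "y = (m, c', h'')" "x \<in> W" "y \<in> W" "{x, y} \<noteq> {a, b}"
        "(c' = c0 \<and> (h'' = Suc h' \<or> h' = Suc h'')) \<or> (h'' = h' \<and> YM m dvd h' \<and> (c' = Suc c0 \<or> c0 = Suc c'))"
        using Ar_step[OF xy x(1)] by blast
      from st(5) show "y \<in> D"
      proof (elim disjE conjE)
        assume "c' = c0" "h'' = Suc h'"
        then show "y \<in> D" using x st(1) unfolding D_def by auto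
      next
        assume e: "c' = c0" "h' = Suc h''"
        show "y \<in> D"
        proof (cases "c0 = c")
          case True
          then have "h' \<noteq> Suc j" using st(4) x(1) st(1) e unfolding a_def b_def by auto
          then show ?thesis using x st(1) e True unfolding D_def by auto
        next
          case False
          then have "h' \<noteq> hb c0" using st(2) x(1) hb[of c0] by auto
          then show ?thesis using x st(1) e False hb[of c0] unfolding D_def by auto
        qed
      next
        assume e: "h'' = h'" "YM m dvd h'"
        have "j < h'" using x(2) by simp
        then have "r + M \<le> h'" using dvd_gt_div[OF M0, of h' j] e unfolding r_def M_def by simp
        then have "c' \<noteq> c \<longrightarrow> hb c' \<le> h'" using hb[of c'] by auto
        then show "y \<in> D" using x(2) st(1) e unfolding D_def by auto
      next
        assume e: "h'' = h'" "YM m dvd h'"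
        have "j < h'" using x(2) by simp
        then have "r + M \<le> h'" using dvd_gt_div[OF M0, of h' j] e unfolding r_def M_def by simp
        then have "c' \<noteq> c \<longrightarrow> hb c' \<le> h'" using hb[of c'] by auto
        then show "y \<in> D" using x(2) st(1) e unfolding D_def by auto
      qed
    qed
    then show False unfolding D_def a_def by simp
  qed
  obtain c1 where c1: "c1 \<noteq> c" "\<forall>h. r \<le> h \<longrightarrow> h \<le> j \<longrightarrow> (m, c1, h) \<in> W" using c1 by blast
  obtain c2 where c2: "c2 \<noteq> c" "\<forall>h. Suc j \<le> h \<longrightarrow> h \<le> r + M \<longrightarrow> (m, c2, h) \<in> W" using c2 by blast
  have colB: "\<forall>h. r \<le> h \<longrightarrow> h \<le> r + M \<longrightarrow> (\<exists>c'. c' \<noteq> c \<and> (m, c', h) \<in> W)"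
  proof (intro allI impI)
    fix h assume "r \<le> h" "h \<le> r + M"
    then show "\<exists>c'. c' \<noteq> c \<and> (m, c', h) \<in> W"
      using c1 c2 by (cases "h \<le> j") (auto simp: not_le Suc_le_eq)
  qed
  show ?thesis
    using count_two[of W "\<lambda>c'. c' = c" "\<lambda>c'. c' \<noteq> c" r M m r, OF fW _ colA colB] by blast
qed


lemma hor_core:
  fixes m c r :: nat
  defines "M \<equiv> YM m"
  defines "a \<equiv> (m, c, r)" and "b \<equiv> (m, Suc c, r)"
  assumes fW: "finite W" and aW: "a \<in> W" and bW: "b \<in> W"
    and walk: "(a, b) \<in> (Ar f W a b)\<^sup>*" and dv: "M dvd r"
  shows "2 * M + 2 \<le> card W"
proof -
  let ?A = "Ar f W a b"
  have walk': "(b, a) \<in> ?A\<^sup>*" using Ar_rev[OF walk] .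
  have M0: "0 < M" unfolding M_def by (rule YM_pos)
  define HL where "HL = (\<lambda>h. \<exists>c'. c' \<le> c \<and> (m, c', h) \<in> W)"
  define HR where "HR = (\<lambda>h. \<exists>c'. Suc c \<le> c' \<and> (m, c', h) \<in> W)"
  have left: "\<exists>lo. \<forall>h. lo \<le> h \<longrightarrow> h \<le> lo + M \<longrightarrow> (\<exists>c'. c' \<le> c \<and> (m, c', h) \<in> W)"
  proof (rule ccontr)
    assume nL: "\<not> ?thesis"
    then obtain h1 where h1: "r \<le> h1" "h1 \<le> r + M" "\<not> HL h1" unfolding HL_def by blast
    have rh1: "r < h1" using h1 aW unfolding HL_def a_def by (metis le_neq_implies_less order_refl)
    have blk: "\<exists>h2. r - M \<le> h2 \<and> h2 \<le> r \<and> \<not> HL h2" if "M \<le> r"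
    proof -
      have "\<not> (\<forall>h. r - M \<le> h \<longrightarrow> h \<le> r - M + M \<longrightarrow> HL h)" using nL unfolding HL_def by blast
      then show ?thesis using that by auto
    qed
    define D where "D = {x. \<exists>c' h'. x = (m, c', h') \<and> c' \<le> c \<and> h' < h1 \<and> (\<forall>h2. h' \<le> h2 \<longrightarrow> h2 \<le> r \<longrightarrow> HL h2)}"
    have "b \<in> D"
    proof (rule closed_rt[OF walk])
      show "a \<in> D" unfolding D_def a_def using rh1 aW unfolding HL_def a_def by force
    next
      fix x y assume xy: "(x, y) \<in> ?A" and xD: "x \<in> D"
      then obtain c0 h' where x: "x = (m, c0, h')" "c0 \<le> c" "h' < h1" "\<forall>h2. h' \<le> h2 \<longrightarrow> h2 \<le> r \<longrightarrow> HL h2"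
        unfolding D_def by blast
      obtain c' h'' where st: "y = (m, c', h'')" "x \<in> W" "y \<in> W" "{x, y} \<noteq> {a, b}"
        "(c' = c0 \<and> (h'' = Suc h' \<or> h' = Suc h'')) \<or> (h'' = h' \<and> YM m dvd h' \<and> (c' = Suc c0 \<or> c0 = Suc c'))"
        using Ar_step[OF xy x(1)] by blast
      from st(5) consider "c' = c0" "h'' = Suc h'" | "c' = c0" "h' = Suc h''"
        | "h'' = h'" "YM m dvd h'" "c' = Suc c0 \<or> c0 = Suc c'" by blast
      then show "y \<in> D"
      proof cases
        assume e: "c' = c0" "h'' = Suc h'"
        have "Suc h' \<noteq> h1" using h1(3) st(1,3) e x(2) unfolding HL_def by auto
        then show "y \<in> D" using x st(1) e unfolding D_def by auto
      next
        assume e: "c' = c0" "h' = Suc h''"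
        have "HL h''" using st(1,3) e x(2) unfolding HL_def by auto
        have "\<forall>h2. h'' \<le> h2 \<longrightarrow> h2 \<le> r \<longrightarrow> HL h2"
        proof (intro allI impI)
          fix h2 assume h2: "h'' \<le> h2" "h2 \<le> r"
          show "HL h2"
          proof (cases "h2 = h''")
            case True then show ?thesis using \<open>HL h''\<close> by simp
          next
            case False then have "h' \<le> h2" using h2(1) e by simp
            then show ?thesis using x(4) h2(2) by blast
          qed
        qed
        then show "y \<in> D" using x st(1) e unfolding D_def by auto
      next
        assume e: "h'' = h'" "YM m dvd h'" and cc: "c' = Suc c0 \<or> c0 = Suc c'"
        have hle: "h' \<le> r" using dvd_two_lt[OF M0 _ dv, of h'] e x(3) h1(2) unfolding M_def by simp
        have "h' = r"
        proof (rule ccontr)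
          assume "h' \<noteq> r"
          then have "h' + M \<le> r" using dvd_two_lt2[OF M0 _ dv, of h'] e hle unfolding M_def by simp
          then obtain h2 where "r - M \<le> h2" "h2 \<le> r" "\<not> HL h2" using blk by force
          moreover have "h' \<le> h2" using \<open>h' + M \<le> r\<close> \<open>r - M \<le> h2\<close> by simp
          ultimately show False using x(4) by blast
        qed
        have "c' \<le> c"
        proof (cases "c' = Suc c0")
          case True
          then have "c0 \<noteq> c" using st(4) x(1) st(1) e \<open>h' = r\<close> unfolding a_def b_def by auto
          then show ?thesis using True x(2) by simp
        next
          case False then show ?thesis using cc x(2) by simp
        qed
        then show "y \<in> D" using x st(1) e unfolding D_def by auto
      qed
    qed
    then show False unfolding D_def b_def by simp
  qed
  have right: "\<exists>lo. \<forall>h. lo \<le> h \<longrightarrow> h \<le> lo + M \<longrightarrow> (\<exists>c'. Suc c \<le> c' \<and> (m, c', h) \<in> W)"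
  proof (rule ccontr)
    assume nL: "\<not> ?thesis"
    then obtain h1 where h1: "r \<le> h1" "h1 \<le> r + M" "\<not> HR h1" unfolding HR_def by blast
    have rh1: "r < h1" using h1 bW unfolding HR_def b_def by (metis le_neq_implies_less order_refl)
    have blk: "\<exists>h2. r - M \<le> h2 \<and> h2 \<le> r \<and> \<not> HR h2" if "M \<le> r"
    proof -
      have "\<not> (\<forall>h. r - M \<le> h \<longrightarrow> h \<le> r - M + M \<longrightarrow> HR h)" using nL unfolding HR_def by blast
      then show ?thesis using that by auto
    qed
    define D where "D = {x. \<exists>c' h'. x = (m, c', h') \<and> Suc c \<le> c' \<and> h' < h1 \<and> (\<forall>h2. h' \<le> h2 \<longrightarrow> h2 \<le> r \<longrightarrow> HR h2)}"
    have "a \<in> D"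
    proof (rule closed_rt[OF walk'])
      show "b \<in> D" unfolding D_def b_def using rh1 bW unfolding HR_def b_def by force
    next
      fix x y assume xy: "(x, y) \<in> ?A" and xD: "x \<in> D"
      then obtain c0 h' where x: "x = (m, c0, h')" "Suc c \<le> c0" "h' < h1" "\<forall>h2. h' \<le> h2 \<longrightarrow> h2 \<le> r \<longrightarrow> HR h2"
        unfolding D_def by blast
      obtain c' h'' where st: "y = (m, c', h'')" "x \<in> W" "y \<in> W" "{x, y} \<noteq> {a, b}"
        "(c' = c0 \<and> (h'' = Suc h' \<or> h' = Suc h'')) \<or> (h'' = h' \<and> YM m dvd h' \<and> (c' = Suc c0 \<or> c0 = Suc c'))"
        using Ar_step[OF xy x(1)] by blast
      from st(5) consider "c' = c0" "h'' = Suc h'" | "c' = c0" "h' = Suc h''"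
        | "h'' = h'" "YM m dvd h'" "c' = Suc c0 \<or> c0 = Suc c'" by blast
      then show "y \<in> D"
      proof cases
        assume e: "c' = c0" "h'' = Suc h'"
        have "Suc h' \<noteq> h1" using h1(3) st(1,3) e x(2) unfolding HR_def by auto
        then show "y \<in> D" using x st(1) e unfolding D_def by auto
      next
        assume e: "c' = c0" "h' = Suc h''"
        have "HR h''" using st(1,3) e x(2) unfolding HR_def by auto
        have "\<forall>h2. h'' \<le> h2 \<longrightarrow> h2 \<le> r \<longrightarrow> HR h2"
        proof (intro allI impI)
          fix h2 assume h2: "h'' \<le> h2" "h2 \<le> r"
          show "HR h2"
          proof (cases "h2 = h''")
            case True then show ?thesis using \<open>HR h''\<close> by simp
          next
            case False then have "h' \<le> h2" using h2(1) e by simp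
            then show ?thesis using x(4) h2(2) by blast
          qed
        qed
        then show "y \<in> D" using x st(1) e unfolding D_def by auto
      next
        assume e: "h'' = h'" "YM m dvd h'" and cc: "c' = Suc c0 \<or> c0 = Suc c'"
        have hle: "h' \<le> r" using dvd_two_lt[OF M0 _ dv, of h'] e x(3) h1(2) unfolding M_def by simp
        have "h' = r"
        proof (rule ccontr)
          assume "h' \<noteq> r"
          then have "h' + M \<le> r" using dvd_two_lt2[OF M0 _ dv, of h'] e hle unfolding M_def by simp
          then obtain h2 where "r - M \<le> h2" "h2 \<le> r" "\<not> HR h2" using blk by force
          moreover have "h' \<le> h2" using \<open>h' + M \<le> r\<close> \<open>r - M \<le> h2\<close> by simp
          ultimately show False using x(4) by blast
        qed
        have "Suc c \<le> c'"
        proof (cases "c0 = Suc c'")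
          case True
          then have "c0 \<noteq> Suc c" using st(4) x(1) st(1) e \<open>h' = r\<close> unfolding a_def b_def by auto
          then show ?thesis using True x(2) by simp
        next
          case False then show ?thesis using cc x(2) by auto
        qed
        then show "y \<in> D" using x st(1) e unfolding D_def by auto
      qed
    qed
    then show False unfolding D_def a_def by simp
  qed
  obtain lo1 where l1: "\<forall>h. lo1 \<le> h \<longrightarrow> h \<le> lo1 + M \<longrightarrow> (\<exists>c'. c' \<le> c \<and> (m, c', h) \<in> W)" using left by blast
  obtain lo2 where l2: "\<forall>h. lo2 \<le> h \<longrightarrow> h \<le> lo2 + M \<longrightarrow> (\<exists>c'. Suc c \<le> c' \<and> (m, c', h) \<in> W)" using right by blast
  show ?thesis
    using count_two[of W "\<lambda>c'. c' \<le> c" "\<lambda>c'. Suc c \<le> c'" lo1 M m lo2, OF fW _ l1 l2] by auto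
qed


lemma cycle_long:
  assumes fW: "finite W" and e: "{a, b} \<in> edges (Yg f)" and aW: "a \<in> W" and bW: "b \<in> W"
    and walk: "(a, b) \<in> (Ar f W a b)\<^sup>*"
  shows "2 * YM (fst a) + 2 \<le> card W"
proof -
  obtain m c h where a: "a = (m, c, h)" by (cases a) auto
  obtain m' c' h' where b: "b = (m', c', h')" by (cases b) auto
  have walk2: "(b, a) \<in> (Ar f W b a)\<^sup>*" using Ar_rev[OF walk] Ar_swap[of f W b a] by simp
  have st: "m' = m \<and> ((c' = c \<and> (h' = Suc h \<or> h = Suc h')) \<or> (h' = h \<and> YM m dvd h \<and> (c' = Suc c \<or> c = Suc c')))"
    using ystep[OF e[unfolded a b]] by blast
  then consider "m' = m" "c' = c" "h' = Suc h" | "m' = m" "c' = c" "h = Suc h'"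
    | "m' = m" "h' = h" "YM m dvd h" "c' = Suc c" | "m' = m" "h' = h" "YM m dvd h" "c = Suc c'" by blast
  then show ?thesis
  proof cases
    case 1 then show ?thesis using vert_core[of W m c h f] fW aW bW walk a b by simp
  next
    case 2 then show ?thesis using vert_core[of W m c h' f] fW aW bW walk2 a b by simp
  next
    case 3 then show ?thesis using hor_core[of W m c h f] fW aW bW walk a b by simp
  next
    case 4 then show ?thesis using hor_core[of W m c' h f] fW aW bW walk2 a b by simp
  qed
qed


definition Ab :: "('b \<times> 'b) set \<Rightarrow> 'b \<Rightarrow> 'b \<Rightarrow> ('b \<times> 'b) set" where
  "Ab R t u = {(x, y). (x, y) \<in> R \<and> {x, y} \<noteq> {t, u}}"

definition side :: "('b \<times> 'b) set \<Rightarrow> 'b \<Rightarrow> 'b \<Rightarrow> 'b set" where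
  "side R t u = {w. (u, w) \<in> (Ab R t u)\<^sup>*}"

lemma Ab_swap: "Ab R u t = Ab R t u"
  unfolding Ab_def by (simp add: insert_commute)

lemma Ab_sym:
  assumes sym: "\<And>x y. (x, y) \<in> R \<Longrightarrow> (y, x) \<in> R"
  shows "(x, y) \<in> Ab R t u \<Longrightarrow> (y, x) \<in> Ab R t u"
proof -
  assume "(x, y) \<in> Ab R t u"
  then have h: "(x, y) \<in> R" "{x, y} \<noteq> {t, u}" by (auto simp: Ab_def)
  have "(y, x) \<in> R" by (rule sym[OF h(1)])
  moreover have "{y, x} \<noteq> {t, u}" using h(2) by (simp add: insert_commute)
  ultimately show ?thesis by (simp add: Ab_def)
qed

lemma Ab_rt_sym:
  assumes sym: "\<And>x y. (x, y) \<in> R \<Longrightarrow> (y, x) \<in> R"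
  shows "(x, y) \<in> (Ab R t u)\<^sup>* \<Longrightarrow> (y, x) \<in> (Ab R t u)\<^sup>*"
proof -
  assume h: "(x, y) \<in> (Ab R t u)\<^sup>*"
  have s: "(Ab R t u)\<inverse> \<subseteq> Ab R t u"
  proof
    fix p assume "p \<in> (Ab R t u)\<inverse>"
    then obtain a b where p: "p = (a, b)" "(b, a) \<in> Ab R t u" by (cases p) auto
    show "p \<in> Ab R t u" using Ab_sym[OF sym p(2)] p(1) by simp
  qed
  show ?thesis using rtrancl_mono[OF s] rtrancl_converseI[OF h] by blast
qed

lemma side_closed:
  assumes "x \<in> side R t u" "(x, y) \<in> R" "{x, y} \<noteq> {t, u}"
  shows "y \<in> side R t u"
proof -
  have "(x, y) \<in> Ab R t u" using assms(2,3) by (simp add: Ab_def)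
  moreover have "(u, x) \<in> (Ab R t u)\<^sup>*" using assms(1) by (simp add: side_def)
  ultimately have "(u, y) \<in> (Ab R t u)\<^sup>*" by (meson rtrancl_into_rtrancl)
  then show ?thesis by (simp add: side_def)
qed

lemma side_sub:
  assumes sub: "R \<subseteq> W \<times> W" and uW: "u \<in> W"
  shows "side R t u \<subseteq> W"
proof
  fix x assume "x \<in> side R t u"
  then have "(u, x) \<in> (Ab R t u)\<^sup>*" by (simp add: side_def)
  then show "x \<in> W"
  proof (induction rule: rtrancl_induct)
    case base then show ?case by (rule uW)
  next
    case (step y z) then show ?case using sub by (auto simp: Ab_def)
  qed
qed

lemma side_disj:
  assumes sym: "\<And>x y. (x, y) \<in> R \<Longrightarrow> (y, x) \<in> R"
    and AC: "t \<notin> side R t u"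
  shows "side R t u \<inter> side R u t = {}"
proof (rule ccontr)
  assume "side R t u \<inter> side R u t \<noteq> {}"
  then obtain x where x: "(u, x) \<in> (Ab R t u)\<^sup>*" "(t, x) \<in> (Ab R u t)\<^sup>*" by (auto simp: side_def)
  have "(x, t) \<in> (Ab R t u)\<^sup>*" using Ab_rt_sym[OF sym x(2)] Ab_swap[of R u t] by simp
  then have "(u, t) \<in> (Ab R t u)\<^sup>*" using x(1) by (rule rtrancl_trans[rotated])
  then show False using AC by (simp add: side_def)
qed

lemma cover:
  assumes sym: "\<And>x y. (x, y) \<in> R \<Longrightarrow> (y, x) \<in> R"
    and AC: "\<And>t u. (t, u) \<in> R \<Longrightarrow> t \<notin> side R t u"
    and reach: "(t, x) \<in> R\<^sup>*"
  shows "x = t \<or> (\<exists>u. (t, u) \<in> R \<and> x \<in> side R t u)"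
  using reach
proof (induction rule: rtrancl_induct)
  case base then show ?case by simp
next
  case (step y z)
  from step.IH show ?case
  proof
    assume "y = t"
    then have "(t, z) \<in> R" using step.hyps(2) by simp
    moreover have "z \<in> side R t z" by (simp add: side_def)
    ultimately show ?thesis by blast
  next
    assume "\<exists>u. (t, u) \<in> R \<and> y \<in> side R t u"
    then obtain u where u: "(t, u) \<in> R" "y \<in> side R t u" by blast
    show ?thesis
    proof (cases "z = t")
      case True then show ?thesis by simp
    next
      case False
      have "{y, z} \<noteq> {t, u}"
      proof
        assume eq: "{y, z} = {t, u}"
        then have "y = t" using False by (auto simp: doubleton_eq_iff)
        then show False using u AC by blast
      qed
      then have "z \<in> side R t u" using side_closed[OF u(2) step.hyps(2)] by simp
      then show ?thesis using u(1) by blast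
    qed
  qed
qed

lemma sink_exists:
  assumes sym: "\<And>x y. (x, y) \<in> R \<Longrightarrow> (y, x) \<in> R"
    and irr: "\<And>x. (x, x) \<notin> R"
    and sub: "R \<subseteq> W \<times> W" and fW: "finite W" and w0: "w0 \<in> W"
    and AC: "\<And>t u. (t, u) \<in> R \<Longrightarrow> t \<notin> side R t u"
    and NB: "\<And>t u. (t, u) \<in> R \<Longrightarrow> \<not> (big t u \<and> big u t)"
  shows "\<exists>u\<in>W. \<forall>w. (u, w) \<in> R \<longrightarrow> \<not> big u w"
proof (cases "\<exists>t u. (t, u) \<in> R \<and> big t u")
  case False then show ?thesis using w0 by blast
next
  case True
  then obtain p where "(fst p, snd p) \<in> R \<and> big (fst p) (snd p)" by auto
  then obtain p0 where p0: "(fst p0, snd p0) \<in> R \<and> big (fst p0) (snd p0)"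
    "\<forall>q. (fst q, snd q) \<in> R \<and> big (fst q) (snd q) \<longrightarrow> card (side R (fst p0) (snd p0)) \<le> card (side R (fst q) (snd q))"
    using ex_has_least_nat[where P = "\<lambda>q. (fst q, snd q) \<in> R \<and> big (fst q) (snd q)" and m = "\<lambda>q. card (side R (fst q) (snd q))"]
    by blast
  define t where "t = fst p0"
  define u where "u = snd p0"
  have tu: "(t, u) \<in> R" "big t u" using p0(1) by (auto simp: t_def u_def)
  have minc: "\<And>t' u'. (t', u') \<in> R \<Longrightarrow> big t' u' \<Longrightarrow> card (side R t u) \<le> card (side R t' u')"
    using p0(2) unfolding t_def u_def by (metis fst_conv snd_conv)
  have uW: "u \<in> W" using tu(1) sub by auto
  have "\<forall>w. (u, w) \<in> R \<longrightarrow> \<not> big u w"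
  proof (intro allI impI notI)
    fix w assume uw: "(u, w) \<in> R" and bw: "big u w"
    have wt: "w \<noteq> t"
    proof
      assume "w = t"
      then show False using NB[OF tu(1)] tu(2) bw by simp
    qed
    have wu: "w \<noteq> u" using uw irr by auto
    have uw_ab: "(u, w) \<in> Ab R t u"
      using uw wt wu unfolding Ab_def by (auto simp: doubleton_eq_iff)
    have sub_side: "side R u w \<subseteq> side R t u"
    proof
      fix x assume "x \<in> side R u w"
      then have wx: "(w, x) \<in> (Ab R u w)\<^sup>*" by (simp add: side_def)
      have "(w, x) \<in> (Ab R t u)\<^sup>*"
        using wx
      proof (induction rule: rtrancl_induct)
        case base then show ?case by simp
      next
        case (step y z)
        have yS: "y \<in> side R u w" using step.hyps(1) by (simp add: side_def)
        have zS: "z \<in> side R u w" using step.hyps(1,2) by (simp add: side_def)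
        have nu: "u \<notin> side R u w" using AC[OF uw] .
        have "{y, z} \<noteq> {t, u}" using yS zS nu by auto
        then have "(y, z) \<in> Ab R t u" using step.hyps(2) by (simp add: Ab_def)
        then show ?case using step.IH by simp
      qed
      then have "(u, x) \<in> (Ab R t u)\<^sup>*" using uw_ab by (meson converse_rtrancl_into_rtrancl)
      then show "x \<in> side R t u" by (simp add: side_def)
    qed
    have "u \<in> side R t u" by (simp add: side_def)
    moreover have "u \<notin> side R u w" using AC[OF uw] .
    ultimately have psub: "side R u w \<subset> side R t u" using sub_side by blast
    have "finite (side R t u)" using side_sub[OF sub uW] fW finite_subset by blast
    then have "card (side R u w) < card (side R t u)" using psub by (rule psubset_card_mono)
    moreover have "card (side R t u) \<le> card (side R u w)" using minc[OF uw bw] .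
    ultimately show False by simp
  qed
  then show ?thesis using uW by blast
qed


lemma Xn_eq: "Xn f n = (LV (f n) (2 ^ 2 ^ (2 * n)), LE (f n) (2 ^ 2 ^ (2 * n)))"
  by (simp add: Xn_def ladder_eq)

lemma YM_mono: "m \<le> m' \<Longrightarrow> YM m \<le> YM m'"
  unfolding YM_def by (intro power_increasing) auto

lemma rt_sym:
  assumes sym: "\<And>x y. (x, y) \<in> R \<Longrightarrow> (y, x) \<in> R" and h: "(a, b) \<in> R\<^sup>*"
  shows "(b, a) \<in> R\<^sup>*"
proof -
  have s: "R\<inverse> \<subseteq> R"
  proof
    fix p assume "p \<in> R\<inverse>"
    then obtain x y where p: "p = (x, y)" "(y, x) \<in> R" by (cases p) auto
    show "p \<in> R" using sym[OF p(2)] p(1) by simp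
  qed
  show ?thesis using rtrancl_mono[OF s] rtrancl_converseI[OF h] by blast
qed

lemma list_invariant:
  assumes "\<And>i. Suc i < length xs \<Longrightarrow> (Q (xs ! i) \<longleftrightarrow> Q (xs ! Suc i))"
  shows "i < length xs \<Longrightarrow> (Q (xs ! i) \<longleftrightarrow> Q (xs ! 0))"
proof (induction i)
  case 0 then show ?case by simp
next
  case (Suc i) then show ?case using assms[of i] by simp
qed

lemma list_reach:
  assumes "\<And>i. Suc i < length xs \<Longrightarrow> (xs ! i, xs ! Suc i) \<in> R"
  shows "i < length xs \<Longrightarrow> (xs ! 0, xs ! i) \<in> R\<^sup>*"
proof (induction i)
  case 0 then show ?case by simp
next
  case (Suc i)
  then have "(xs ! 0, xs ! i) \<in> R\<^sup>*" by simp
  moreover have "(xs ! i, xs ! Suc i) \<in> R" using assms Suc.prems by simp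
  ultimately show ?case by (rule rtrancl_into_rtrancl)
qed

lemma two_pow_ge: "n * n \<le> (2::nat) ^ 2 ^ (2 * n - 1)"
proof -
  have "2 * n - 1 < 2 ^ (2 * n - 1)" by (rule less_exp)
  then have a: "2 * n \<le> 2 ^ (2 * n - 1)" by arith
  have "n < 2 ^ n" by (rule less_exp)
  then have "n * n \<le> 2 ^ n * 2 ^ n" by (intro mult_le_mono) auto
  also have "\<dots> = (2::nat) ^ (2 * n)" by (simp add: power_add[symmetric] mult_2)
  also have "\<dots> \<le> 2 ^ 2 ^ (2 * n - 1)" using a by (intro power_increasing) auto
  finally show ?thesis .
qed

lemma arith_small:
  assumes n2: "2 \<le> n" and m1: "1 \<le> m" and mn: "m < n" and fm: "fm \<le> m" and F2: "2 \<le> F"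
    and ineq: "F * ((2::nat) ^ 2 ^ (2 * n) * F + 1) \<le> (F - 1) * (fm * (YM m * fm + 1))"
  shows False
proof -
  define Q where "Q = (2::nat) ^ 2 ^ (2 * n - 1)"
  have LQ: "(2::nat) ^ 2 ^ (2 * n) = Q * Q"
  proof -
    have "(2::nat) ^ (2 * n) = 2 ^ (2 * n - 1) * 2" using n2
      by (metis Suc_diff_1 mult_2 add_gr_0 less_le_trans pos2 power_Suc2 zero_less_numeral)
    then have "(2::nat) ^ 2 ^ (2 * n) = (2 ^ 2 ^ (2 * n - 1)) ^ 2" by (simp add: power_mult)
    then show ?thesis unfolding Q_def by (simp add: power2_eq_square)
  qed
  have YQ: "YM m \<le> Q" unfolding YM_def Q_def using mn by (intro power_increasing) auto
  have nQ: "n * n \<le> Q" unfolding Q_def by (rule two_pow_ge)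
  have "fm * (YM m * fm + 1) \<le> n * (Q * n)"
  proof -
    have "fm \<le> n" using fm mn by simp
    moreover have "YM m * fm + 1 \<le> Q * n"
    proof -
      have "YM m * fm \<le> Q * m" using YQ fm by (rule mult_le_mono)
      moreover have "Q * m + 1 \<le> Q * n"
      proof -
        have "Q * Suc m \<le> Q * n" using mn by (intro mult_le_mono2) simp
        moreover have "1 \<le> Q" unfolding Q_def by simp
        ultimately show ?thesis by simp
      qed
      ultimately show ?thesis by simp
    qed
    ultimately show ?thesis by (rule mult_le_mono)
  qed
  also have "\<dots> = Q * (n * n)" by simp
  also have "\<dots> \<le> Q * Q" using nQ by simp
  finally have A: "fm * (YM m * fm + 1) \<le> Q * Q" .
  have "(F - 1) * (fm * (YM m * fm + 1)) \<le> (F - 1) * (Q * Q)" using A by simp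
  also have "\<dots> < F * (Q * Q * F + 1)"
  proof -
    have "(F - 1) * (Q * Q) \<le> F * (Q * Q)" by simp
    also have "\<dots> \<le> F * (Q * Q * F)" using F2 by simp
    also have "\<dots> < F * (Q * Q * F + 1)" using F2 by simp
    finally show ?thesis .
  qed
  finally show False using ineq LQ by simp
qed


lemma LE_vert: "i < F \<Longrightarrow> j < L * F \<Longrightarrow> {(i, j), (i, Suc j)} \<in> LE F L"
  unfolding LE_def by fastforce

lemma LE_hor: "Suc i < F \<Longrightarrow> j \<le> L * F \<Longrightarrow> L dvd j \<Longrightarrow> {(i, j), (Suc i, j)} \<in> LE F L"
  unfolding LE_def by fastforce

lemma LE_two: "e \<in> LE F L \<Longrightarrow> x \<in> e \<Longrightarrow> y \<in> e \<Longrightarrow> x \<noteq> y \<Longrightarrow> e = {x, y}"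
  unfolding LE_def by auto

lemma card_LV: "card (LV F L) = F * (L * F + 1)"
proof -
  have "LV F L = {..<F} \<times> {..L*F}" by (auto simp: LV_def)
  then show ?thesis by (simp add: card_cartesian_product)
qed

locale wsetup =
  fixes f :: "nat \<Rightarrow> nat" and n :: nat
    and \<phi> :: "nat \<times> nat \<Rightarrow> nat \<times> nat \<times> nat" and P :: "(nat \<times> nat) set \<Rightarrow> (nat \<times> nat \<times> nat) list"
  assumes n2: "2 \<le> n" and fb: "\<forall>m\<ge>2. 2 \<le> f m \<and> f m \<le> m" and f1: "f 1 = 1"
    and cw: "coarse_wiring (f n - 1) (Xn f n) (Yg f) \<phi> P"
    and small: "wiring_volume (Xn f n) \<phi> P \<le> 2 * YM n"
begin

abbreviation "FF \<equiv> f n"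
abbreviation "LL \<equiv> (2::nat) ^ 2 ^ (2 * n)"
abbreviation "VXn \<equiv> LV FF LL"
abbreviation "EXn \<equiv> LE FF LL"
abbreviation "WW \<equiv> \<phi> ` VXn \<union> (\<Union>e\<in>EXn. set (P e))"
abbreviation "RR \<equiv> {(x, y). x \<in> WW \<and> y \<in> WW \<and> {x, y} \<in> edges (Yg f)}"

lemma F2: "2 \<le> FF" using fb n2 by auto
lemma L1: "1 \<le> LL" by simp
lemma vX: "verts (Xn f n) = VXn" by (simp add: Xn_eq verts_def)
lemma eX: "edges (Xn f n) = EXn" by (simp add: Xn_eq edges_def)

lemma cw1: "v \<in> VXn \<Longrightarrow> \<phi> v \<in> verts (Yg f)"
  using cw unfolding coarse_wiring_def wiring_def vX eX by blast
lemma cw2: "e \<in> EXn \<Longrightarrow> is_path (Yg f) (P e) \<and> {hd (P e), last (P e)} = \<phi> ` e"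
  using cw unfolding coarse_wiring_def wiring_def vX eX by blast
lemma cw3: "y \<in> verts (Yg f) \<Longrightarrow> card {v \<in> VXn. \<phi> v = y} \<le> FF - 1"
  using cw unfolding coarse_wiring_def wiring_def vX eX by blast
lemma cw4: "\<epsilon> \<in> edges (Yg f) \<Longrightarrow> card {e \<in> EXn. \<epsilon> \<in> path_edges (P e)} \<le> FF - 1"
  using cw unfolding coarse_wiring_def wiring_def vX eX by blast

lemma vol: "card WW \<le> 2 * YM n" using small by (simp add: wiring_volume_def vX eX)
lemma fW: "finite WW" using finite_LV finite_LE by auto

lemma path_W: "e \<in> EXn \<Longrightarrow> set (P e) \<subseteq> WW" by blast

lemma W_verts: "WW \<subseteq> verts (Yg f)"
proof
  fix w assume "w \<in> WW"
  then show "w \<in> verts (Yg f)"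
  proof
    assume "w \<in> \<phi> ` VXn" then show ?thesis using cw1 by blast
  next
    assume "w \<in> (\<Union>e\<in>EXn. set (P e))"
    then obtain e where "e \<in> EXn" "w \<in> set (P e)" by blast
    then show ?thesis using cw2[of e] unfolding is_path_def by blast
  qed
qed

lemma R_sym: "(x, y) \<in> RR \<Longrightarrow> (y, x) \<in> RR" by (simp add: insert_commute)
lemma R_irr: "(x, x) \<notin> RR" using yedge_two[of x x f] by auto
lemma R_sub: "RR \<subseteq> WW \<times> WW" by auto
lemma Ab_eq: "Ab RR t u = Ar f WW t u" by (auto simp: Ab_def Ar_def)

lemma path_step:
  assumes e: "e \<in> EXn" and i: "Suc i < length (P e)"
  shows "(P e ! i, P e ! Suc i) \<in> RR" "{P e ! i, P e ! Suc i} \<in> path_edges (P e)"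
proof -
  have pe: "{P e ! i, P e ! Suc i} \<in> path_edges (P e)" unfolding path_edges_def using i by blast
  then show "{P e ! i, P e ! Suc i} \<in> path_edges (P e)" .
  have "{P e ! i, P e ! Suc i} \<in> edges (Yg f)" using cw2[OF e] pe unfolding is_path_def by blast
  moreover have "P e ! i \<in> set (P e)" "P e ! Suc i \<in> set (P e)" using i by auto
  then have "P e ! i \<in> WW" "P e ! Suc i \<in> WW" using e by blast+
  ultimately show "(P e ! i, P e ! Suc i) \<in> RR" by simp
qed

lemma edge_reach:
  assumes e: "e \<in> EXn" and x: "x \<in> e" and y: "y \<in> e"
  shows "(\<phi> x, \<phi> y) \<in> RR\<^sup>*"
proof -
  define xs where "xs = P e"
  have ne: "xs \<noteq> []" using cw2[OF e] unfolding is_path_def xs_def by blast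
  have hl: "(hd xs, last xs) \<in> RR\<^sup>*"
  proof -
    have "(xs ! 0, xs ! (length xs - 1)) \<in> RR\<^sup>*"
      using list_reach[of xs RR "length xs - 1"] path_step(1)[OF e] ne unfolding xs_def by simp
    then show ?thesis using ne by (simp add: hd_conv_nth last_conv_nth)
  qed
  have lh: "(last xs, hd xs) \<in> RR\<^sup>*" using rt_sym[OF R_sym hl] by blast
  have "\<phi> x \<in> {hd xs, last xs}" "\<phi> y \<in> {hd xs, last xs}" using cw2[OF e] x y unfolding xs_def by auto
  then show ?thesis using hl lh by auto
qed

lemma conn: assumes v: "v \<in> VXn" shows "(\<phi> (0, 0), \<phi> v) \<in> RR\<^sup>*"
proof -
  obtain i j where ij: "v = (i, j)" "i < FF" "j \<le> LL * FF" using v by (auto simp: LV_def)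
  have vert: "(\<phi> (i, 0), \<phi> (i, j')) \<in> RR\<^sup>*" if "j' \<le> LL * FF" for j'
    using that
  proof (induction j')
    case 0 then show ?case by simp
  next
    case (Suc j')
    have "{(i, j'), (i, Suc j')} \<in> EXn" using Suc.prems ij(2) by (intro LE_vert) auto
    then have "(\<phi> (i, j'), \<phi> (i, Suc j')) \<in> RR\<^sup>*" by (rule edge_reach) auto
    then show ?case using Suc by (meson Suc_leD rtrancl_trans)
  qed
  have hor: "(\<phi> (0, 0), \<phi> (i', 0)) \<in> RR\<^sup>*" if "i' < FF" for i'
    using that
  proof (induction i')
    case 0 then show ?case by simp
  next
    case (Suc i')
    have "{(i', 0), (Suc i', 0)} \<in> EXn" using Suc.prems by (intro LE_hor) auto
    then have "(\<phi> (i', 0), \<phi> (Suc i', 0)) \<in> RR\<^sup>*" by (rule edge_reach) auto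
    then show ?case using Suc by (meson Suc_lessD rtrancl_trans)
  qed
  show ?thesis using hor[OF ij(2)] vert[OF ij(3)] ij(1) by (meson rtrancl_trans)
qed

lemma conn_W: assumes w: "w \<in> WW" shows "(\<phi> (0, 0), w) \<in> RR\<^sup>*"
  using w
proof
  assume "w \<in> \<phi> ` VXn" then show ?thesis using conn by blast
next
  assume "w \<in> (\<Union>e\<in>EXn. set (P e))"
  then obtain e where e: "e \<in> EXn" "w \<in> set (P e)" by blast
  from e(2) obtain i where i: "i < length (P e)" "w = P e ! i" by (auto simp: in_set_conv_nth)
  have ne: "P e \<noteq> []" using cw2[OF e(1)] unfolding is_path_def by blast
  have "(P e ! 0, P e ! i) \<in> RR\<^sup>*"
    using list_reach[of "P e" RR i] path_step(1)[OF e(1)] i(1) by simp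
  then have r1: "(hd (P e), w) \<in> RR\<^sup>*" using ne i(2) by (simp add: hd_conv_nth)
  have "hd (P e) \<in> \<phi> ` e" using cw2[OF e(1)] by blast
  then obtain x where x: "x \<in> e" "hd (P e) = \<phi> x" by blast
  have "x \<in> VXn" using LE_sub[OF e(1)] x(1) by blast
  then have "(\<phi> (0, 0), hd (P e)) \<in> RR\<^sup>*" using conn x(2) by simp
  then show ?thesis using r1 by (rule rtrancl_trans)
qed

definition m0 where "m0 = fst (\<phi> (0, 0))"

lemma layer: assumes w: "w \<in> WW" shows "fst w = m0"
proof -
  have "(\<phi> (0, 0), w) \<in> RR\<^sup>*" by (rule conn_W[OF w])
  then show ?thesis
  proof (induction rule: rtrancl_induct)
    case base then show ?case by (simp add: m0_def)
  next
    case (step y z)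
    obtain a b c where y: "y = (a, b, c)" by (cases y) auto
    obtain a' b' c' where z: "z = (a', b', c')" by (cases z) auto
    have "{(a, b, c), (a', b', c')} \<in> edges (Yg f)" using step.hyps(2) y z by simp
    then have "a' = a" using ystep by blast
    then show ?case using step.IH y z by simp
  qed
qed

end


lemma list_invariant_set:
  assumes "\<forall>i. Suc i < length xs \<longrightarrow> (xs ! i \<in> A \<longleftrightarrow> xs ! Suc i \<in> A)"
  shows "i < length xs \<Longrightarrow> (xs ! i \<in> A \<longleftrightarrow> xs ! 0 \<in> A)"
proof (induction i)
  case 0 then show ?case by simp
next
  case (Suc i)
  then have "xs ! i \<in> A \<longleftrightarrow> xs ! 0 \<in> A" by simp
  moreover have "xs ! i \<in> A \<longleftrightarrow> xs ! Suc i \<in> A" using assms Suc.prems by blast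
  ultimately show ?case by blast
qed

context wsetup
begin

lemma m0_props: "1 \<le> m0" "\<phi> (0, 0) \<in> WW"
proof -
  have v0: "(0, 0) \<in> VXn" using F2 by (simp add: LV_def)
  then have w: "\<phi> (0, 0) \<in> WW" by blast
  then show "\<phi> (0, 0) \<in> WW" .
  obtain a b c where abc: "\<phi> (0, 0) = (a, b, c)" by (cases "\<phi> (0, 0)") auto
  have "(a, b, c) \<in> verts (Yg f)" using cw1[OF v0] abc by simp
  then show "1 \<le> m0" using abc by (simp add: m0_def Yg_verts)
qed

lemma fib_sum: "card VXn \<le> card (\<phi> ` VXn) * (FF - 1)"
proof -
  have eq: "VXn = (\<Union>y\<in>\<phi> ` VXn. {v \<in> VXn. \<phi> v = y})" by auto
  have c: "card (\<Union>y\<in>\<phi> ` VXn. {v \<in> VXn. \<phi> v = y}) \<le> (\<Sum>y\<in>\<phi> ` VXn. card {v \<in> VXn. \<phi> v = y})"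
    by (rule card_UN_le) (simp add: finite_LV)
  have "card VXn \<le> (\<Sum>y\<in>\<phi> ` VXn. card {v \<in> VXn. \<phi> v = y})"
    using c arg_cong[OF eq, of card] by linarith
  also have "\<dots> \<le> (\<Sum>y\<in>\<phi> ` VXn. FF - 1)"
  proof (rule sum_mono)
    fix y assume "y \<in> \<phi> ` VXn"
    then have "y \<in> verts (Yg f)" using cw1 by blast
    then show "card {v \<in> VXn. \<phi> v = y} \<le> FF - 1" by (rule cw3)
  qed
  finally show ?thesis by simp
qed

lemma m_ge: "n \<le> m0"
proof (rule ccontr)
  assume "\<not> n \<le> m0"
  then have mn: "m0 < n" by simp
  have fm: "f m0 \<le> m0"
  proof (cases "m0 = 1")
    case True then show ?thesis using f1 by simp
  next
    case False then have "2 \<le> m0" using m0_props(1) by simp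
    then show ?thesis using fb by blast
  qed
  have sub: "\<phi> ` VXn \<subseteq> (\<lambda>(c, h). (m0, c, h)) ` ({..<f m0} \<times> {..YM m0 * f m0})"
  proof
    fix y assume y: "y \<in> \<phi> ` VXn"
    then have yW: "y \<in> WW" by blast
    obtain a b c where abc: "y = (a, b, c)" by (cases y) auto
    have "a = m0" using layer[OF yW] abc by simp
    have "(a, b, c) \<in> verts (Yg f)" using subsetD[OF W_verts yW] abc by simp
    then have v: "1 \<le> a \<and> b < f a \<and> c \<le> YM a * f a" using Yg_verts[of a b c f] by blast
    have y2: "y = (\<lambda>(c, h). (m0, c, h)) (b, c)" using abc \<open>a = m0\<close> by simp
    have "(b, c) \<in> {..<f m0} \<times> {..YM m0 * f m0}" using v \<open>a = m0\<close> by simp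
    then show "y \<in> (\<lambda>(c, h). (m0, c, h)) ` ({..<f m0} \<times> {..YM m0 * f m0})"
      using y2 by (rule rev_image_eqI)
  qed
  have "card (\<phi> ` VXn) \<le> card ((\<lambda>(c, h). (m0, c, h)) ` ({..<f m0} \<times> {..YM m0 * f m0}))"
    by (rule card_mono[OF _ sub]) simp
  also have "\<dots> \<le> card ({..<f m0} \<times> {..YM m0 * f m0})" by (rule card_image_le) auto
  also have "\<dots> = f m0 * (YM m0 * f m0 + 1)" by (simp add: card_cartesian_product)
  finally have c1: "card (\<phi> ` VXn) \<le> f m0 * (YM m0 * f m0 + 1)" .
  have "FF * (LL * FF + 1) \<le> card (\<phi> ` VXn) * (FF - 1)" using fib_sum card_LV by simp
  also have "\<dots> \<le> (FF - 1) * (f m0 * (YM m0 * f m0 + 1))" using c1 by (simp add: mult.commute)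
  finally show False using arith_small[OF n2 m0_props(1) mn fm F2] by blast
qed

lemma AC: assumes tu: "(t, u) \<in> RR" shows "t \<notin> side RR t u"
proof
  assume "t \<in> side RR t u"
  then have "(u, t) \<in> (Ar f WW u t)\<^sup>*" using Ab_eq Ar_swap by (simp add: side_def)
  moreover have "{u, t} \<in> edges (Yg f)" "u \<in> WW" "t \<in> WW" using tu by (auto simp: insert_commute)
  ultimately have "2 * YM (fst u) + 2 \<le> card WW" using cycle_long[OF fW] by blast
  moreover have "fst u = m0" using layer tu by blast
  moreover have "YM n \<le> YM m0" using m_ge by (rule YM_mono)
  ultimately show False using vol by simp
qed

abbreviation "SS t u \<equiv> {v \<in> VXn. \<phi> v \<in> side RR t u}"

lemma cut: assumes tu: "(t, u) \<in> RR" shows "card (cutE EXn (SS t u)) < FF"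
proof -
  have sub: "cutE EXn (SS t u) \<subseteq> {e \<in> EXn. {t, u} \<in> path_edges (P e)}"
  proof
    fix e assume "e \<in> cutE EXn (SS t u)"
    then obtain x y where e: "e \<in> EXn" "x \<in> e" "y \<in> e" "x \<in> SS t u" "y \<notin> SS t u"
      unfolding cutE_def by blast
    have yV: "y \<in> VXn" using LE_sub[OF e(1)] e(3) by blast
    have sx: "\<phi> x \<in> side RR t u" using e(4) by simp
    have sy: "\<phi> y \<notin> side RR t u" using e(5) yV by simp
    have "{t, u} \<in> path_edges (P e)"
    proof (rule ccontr)
      assume nt: "{t, u} \<notin> path_edges (P e)"
      define xs where "xs = P e"
      have ne: "xs \<noteq> []" using cw2[OF e(1)] unfolding is_path_def xs_def by blast
      have stp: "(xs ! i \<in> side RR t u) \<longleftrightarrow> (xs ! Suc i \<in> side RR t u)" if i: "Suc i < length xs" for i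
      proof -
        have i': "Suc i < length (P e)" using i xs_def by simp
        have r: "(xs ! i, xs ! Suc i) \<in> RR" unfolding xs_def by (rule path_step(1)[OF e(1) i'])
        have ne2: "{xs ! i, xs ! Suc i} \<noteq> {t, u}" using path_step(2)[OF e(1) i'] nt unfolding xs_def by metis
        show ?thesis
        proof
          assume "xs ! i \<in> side RR t u"
          then show "xs ! Suc i \<in> side RR t u" by (rule side_closed[OF _ r ne2])
        next
          assume "xs ! Suc i \<in> side RR t u"
          moreover have "(xs ! Suc i, xs ! i) \<in> RR" using R_sym[OF r] .
          moreover have "{xs ! Suc i, xs ! i} \<noteq> {t, u}" using ne2 by (simp add: insert_commute)
          ultimately show "xs ! i \<in> side RR t u" by (rule side_closed)
        qed
      qed
      have ln: "length xs - 1 < length xs" using ne by simp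
      have stp': "\<forall>i. Suc i < length xs \<longrightarrow> (xs ! i \<in> side RR t u \<longleftrightarrow> xs ! Suc i \<in> side RR t u)"
        using stp by blast
      have "(xs ! (length xs - 1) \<in> side RR t u) \<longleftrightarrow> (xs ! 0 \<in> side RR t u)"
        using list_invariant_set[OF stp' ln] .
      then have hl: "(last xs \<in> side RR t u) \<longleftrightarrow> (hd xs \<in> side RR t u)"
        using ne by (simp add: hd_conv_nth last_conv_nth)
      have "\<phi> x \<in> {hd xs, last xs}" "\<phi> y \<in> {hd xs, last xs}" using cw2[OF e(1)] e(2,3) unfolding xs_def by auto
      then show False using hl sx sy by auto
    qed
    then show "e \<in> {e \<in> EXn. {t, u} \<in> path_edges (P e)}" using e(1) by blast
  qed
  have "card (cutE EXn (SS t u)) \<le> card {e \<in> EXn. {t, u} \<in> path_edges (P e)}"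
    using sub finite_LE by (intro card_mono) auto
  also have "\<dots> \<le> FF - 1" using cw4 tu by simp
  finally show ?thesis using F2 by simp
qed

definition big where "big t u \<longleftrightarrow> (\<exists>c<FF. \<forall>h\<le>LL*FF. (c, h) \<in> SS t u)"

lemma NB: assumes tu: "(t, u) \<in> RR" shows "\<not> (big t u \<and> big u t)"
proof
  assume b: "big t u \<and> big u t"
  have ut: "(u, t) \<in> RR" using R_sym[OF tu] .
  have disj: "side RR t u \<inter> side RR u t = {}" by (rule side_disj[OF R_sym AC[OF tu]])
  obtain c where c: "c < FF" "\<forall>h\<le>LL*FF. (c, h) \<in> SS t u" using b unfolding big_def by blast
  obtain k where k: "k \<le> FF" "\<forall>c<FF. (c, k * LL) \<in> SS t u"
    using full_col_row[OF L1 cut[OF tu] c] by blast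
  obtain c' where c': "c' < FF" "\<forall>h\<le>LL*FF. (c', h) \<in> SS u t" using b unfolding big_def by blast
  have "k * LL \<le> LL * FF" using k(1) by (simp add: mult.commute)
  then have "(c', k * LL) \<in> SS u t" using c' by blast
  moreover have "(c', k * LL) \<in> SS t u" using k(2) c'(1) by blast
  ultimately show False using disj by blast
qed

lemma nbr_card: assumes uW: "u \<in> WW" shows "card {w. (u, w) \<in> RR} \<le> 4"
proof -
  obtain m c h where u: "u = (m, c, h)" by (cases u) auto
  have "{w. (u, w) \<in> RR} \<subseteq> set [(m, c, Suc h), (m, c, h - 1), (m, Suc c, h), (m, c - 1, h)]"
  proof
    fix w assume "w \<in> {w. (u, w) \<in> RR}"
    then have e: "{u, w} \<in> edges (Yg f)" by simp
    obtain m' c' h' where w: "w = (m', c', h')" by (cases w) auto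
    have "m' = m \<and> ((c' = c \<and> (h' = Suc h \<or> h = Suc h')) \<or> (h' = h \<and> YM m dvd h \<and> (c' = Suc c \<or> c = Suc c')))"
      using ystep[of m c h m' c' h' f] e u w by blast
    then show "w \<in> set [(m, c, Suc h), (m, c, h - 1), (m, Suc c, h), (m, c - 1, h)]" using w by auto
  qed
  then have "card {w. (u, w) \<in> RR} \<le> card (set [(m, c, Suc h), (m, c, h - 1), (m, Suc c, h), (m, c - 1, h)])"
    by (intro card_mono) auto
  also have "\<dots> \<le> 4" using card_length[of "[(m, c, Suc h), (m, c, h - 1), (m, Suc c, h), (m, c - 1, h)]"] by simp
  finally show ?thesis .
qed

theorem contra: False
proof -
  obtain u where uW: "u \<in> WW" and sink: "\<forall>w. (u, w) \<in> RR \<longrightarrow> \<not> big u w"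
    using sink_exists[of RR WW "\<phi> (0, 0)" big, OF R_sym R_irr R_sub fW m0_props(2) AC NB] by blast
  define N where "N = {w. (u, w) \<in> RR}"
  have fN: "finite N" unfolding N_def using fW by (rule rev_finite_subset) auto
  have cN: "card N \<le> 4" unfolding N_def by (rule nbr_card[OF uW])
  have cover: "VXn \<subseteq> {v \<in> VXn. \<phi> v = u} \<union> (\<Union>w\<in>N. SS u w)"
  proof
    fix v assume v: "v \<in> VXn"
    have "(\<phi> (0, 0), u) \<in> RR\<^sup>*" by (rule conn_W[OF uW])
    then have "(u, \<phi> (0, 0)) \<in> RR\<^sup>*" using rt_sym[OF R_sym] by blast
    then have "(u, \<phi> v) \<in> RR\<^sup>*" using conn[OF v] by (rule rtrancl_trans)
    then have "\<phi> v = u \<or> (\<exists>w. (u, w) \<in> RR \<and> \<phi> v \<in> side RR u w)"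
      using cover[OF R_sym AC] by blast
    then show "v \<in> {v \<in> VXn. \<phi> v = u} \<union> (\<Union>w\<in>N. SS u w)" using v unfolding N_def by blast
  qed
  have each: "4 * card (SS u w) \<le> LL * FF^2" if w: "w \<in> N" for w
  proof -
    have uw: "(u, w) \<in> RR" using w by (simp add: N_def)
    have "\<not> big u w" using sink uw by blast
    then have nf: "\<forall>c<FF. \<exists>h\<le>LL*FF. (c, h) \<notin> SS u w" unfolding big_def by blast
    show ?thesis using small_side[OF L1 _ cut[OF uw] nf] by blast
  qed
  have "4 * (\<Sum>w\<in>N. card (SS u w)) = (\<Sum>w\<in>N. 4 * card (SS u w))" by (simp add: sum_distrib_left)
  also have "\<dots> \<le> (\<Sum>w\<in>N. LL * FF^2)" using each by (intro sum_mono) auto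
  also have "\<dots> = card N * (LL * FF^2)" by simp
  also have "\<dots> \<le> 4 * (LL * FF^2)" using cN by (intro mult_le_mono1)
  finally have sumb: "(\<Sum>w\<in>N. card (SS u w)) \<le> LL * FF^2" by simp
  have uV: "u \<in> verts (Yg f)" using subsetD[OF W_verts uW] .
  have "card VXn \<le> card ({v \<in> VXn. \<phi> v = u} \<union> (\<Union>w\<in>N. SS u w))"
    using cover finite_LV fN by (intro card_mono) auto
  also have "\<dots> \<le> card {v \<in> VXn. \<phi> v = u} + card (\<Union>w\<in>N. SS u w)" by (rule card_Un_le)
  also have "\<dots> \<le> (FF - 1) + (\<Sum>w\<in>N. card (SS u w))"
    using cw3[OF uV] card_UN_le[OF fN, of "\<lambda>w. SS u w"] by simp
  also have "\<dots> \<le> (FF - 1) + LL * FF^2" using sumb by simp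
  finally have "FF * (LL * FF + 1) \<le> (FF - 1) + LL * FF^2" using card_LV by simp
  then show False using F2 by (simp add: power2_eq_square algebra_simps)
qed

end


lemma vol_bound:
  assumes n2: "2 \<le> n" and fb: "\<forall>m\<ge>2. 2 \<le> f m \<and> f m \<le> m" and f1: "f 1 = 1"
    and cw: "coarse_wiring (f n - 1) (Xn f n) (Yg f) \<phi> P"
  shows "2 * 2 ^ 2 ^ (2 * n + 1) + 1 \<le> wiring_volume (Xn f n) \<phi> P"
proof (rule ccontr)
  assume "\<not> ?thesis"
  then have "wiring_volume (Xn f n) \<phi> P \<le> 2 * YM n" by (simp add: YM_def)
  then have "wsetup f n \<phi> P" using n2 fb f1 cw by (simp add: wsetup_def)
  then show False by (rule wsetup.contra)
qed

definition tagG :: "nat \<Rightarrow> (nat \<times> nat) graph \<Rightarrow> (nat \<times> nat \<times> nat) graph" where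
  "tagG n G = ((\<lambda>v. (n, v)) ` verts G, (\<lambda>e. (\<lambda>v. (n, v)) ` e) ` edges G)"

lemma tag_transfer:
  fixes \<phi>' :: "nat \<times> nat \<times> nat \<Rightarrow> nat \<times> nat \<times> nat" and P' :: "(nat \<times> nat \<times> nat) set \<Rightarrow> (nat \<times> nat \<times> nat) list"
  assumes cw: "coarse_wiring k (tagG n G) Y \<phi>' P'"
    and fin: "finite (verts G)" "finite (edges G)"
  shows "coarse_wiring k G Y (\<phi>' \<circ> (\<lambda>v. (n, v))) (\<lambda>e. P' ((\<lambda>v. (n, v)) ` e))"
    and "wiring_volume G (\<phi>' \<circ> (\<lambda>v. (n, v))) (\<lambda>e. P' ((\<lambda>v. (n, v)) ` e)) = wiring_volume (tagG n G) \<phi>' P'"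
proof -
  define tg where "tg = (\<lambda>v::nat \<times> nat. (n, v))"
  have injt: "inj tg" by (auto simp: inj_def tg_def)
  have inje: "inj (image tg)" using injt by (simp add: inj_def inj_image_eq_iff)
  have vT: "verts (tagG n G) = tg ` verts G" by (simp add: tagG_def verts_def tg_def)
  have eT: "edges (tagG n G) = image tg ` edges G" by (simp add: tagG_def edges_def tg_def)
  have w: "\<forall>v\<in>verts (tagG n G). \<phi>' v \<in> verts Y"
    "\<forall>e\<in>edges (tagG n G). is_path Y (P' e) \<and> {hd (P' e), last (P' e)} = \<phi>' ` e"
    "\<forall>y\<in>verts Y. card {v \<in> verts (tagG n G). \<phi>' v = y} \<le> k"
    "\<forall>\<epsilon>\<in>edges Y. card {e \<in> edges (tagG n G). \<epsilon> \<in> path_edges (P' e)} \<le> k"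
    using cw unfolding coarse_wiring_def wiring_def by blast+
  have c3: "card {v \<in> verts G. (\<phi>' \<circ> tg) v = y} \<le> k" if y: "y \<in> verts Y" for y
  proof -
    have "tg ` {v \<in> verts G. (\<phi>' \<circ> tg) v = y} = {v \<in> verts (tagG n G). \<phi>' v = y}" unfolding vT by auto
    moreover have "card (tg ` {v \<in> verts G. (\<phi>' \<circ> tg) v = y}) = card {v \<in> verts G. (\<phi>' \<circ> tg) v = y}"
      by (rule card_image[OF inj_on_subset[OF injt subset_UNIV]])
    ultimately have "card {v \<in> verts G. (\<phi>' \<circ> tg) v = y} = card {v \<in> verts (tagG n G). \<phi>' v = y}"
      by simp
    then show ?thesis using w(3) y by simp
  qed
  have c4: "card {e \<in> edges G. \<epsilon> \<in> path_edges (P' (tg ` e))} \<le> k" if y: "\<epsilon> \<in> edges Y" for \<epsilon>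
  proof -
    have "image tg ` {e \<in> edges G. \<epsilon> \<in> path_edges (P' (tg ` e))} = {e \<in> edges (tagG n G). \<epsilon> \<in> path_edges (P' e)}"
      unfolding eT by auto
    moreover have "card (image tg ` {e \<in> edges G. \<epsilon> \<in> path_edges (P' (tg ` e))}) = card {e \<in> edges G. \<epsilon> \<in> path_edges (P' (tg ` e))}"
      by (rule card_image[OF inj_on_subset[OF inje subset_UNIV]])
    ultimately have "card {e \<in> edges G. \<epsilon> \<in> path_edges (P' (tg ` e))} = card {e \<in> edges (tagG n G). \<epsilon> \<in> path_edges (P' e)}"
      by simp
    then show ?thesis using w(4) y by simp
  qed
  show "coarse_wiring k G Y (\<phi>' \<circ> (\<lambda>v. (n, v))) (\<lambda>e. P' ((\<lambda>v. (n, v)) ` e))"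
    unfolding coarse_wiring_def wiring_def
  proof (intro conjI ballI)
    fix v assume "v \<in> verts G"
    then show "(\<phi>' \<circ> (\<lambda>v. (n, v))) v \<in> verts Y" using w(1) vT tg_def by auto
  next
    fix e assume e: "e \<in> edges G"
    then have "tg ` e \<in> edges (tagG n G)" using eT by simp
    then have "is_path Y (P' (tg ` e)) \<and> {hd (P' (tg ` e)), last (P' (tg ` e))} = \<phi>' ` (tg ` e)" using w(2) by blast
    then show "is_path Y (P' ((\<lambda>v. (n, v)) ` e))"
      "{hd (P' ((\<lambda>v. (n, v)) ` e)), last (P' ((\<lambda>v. (n, v)) ` e))} = (\<phi>' \<circ> (\<lambda>v. (n, v))) ` e"
      unfolding tg_def by (simp_all add: image_comp)
  next
    fix y assume "y \<in> verts Y" then show "card {v \<in> verts G. (\<phi>' \<circ> (\<lambda>v. (n, v))) v = y} \<le> k"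
      using c3 unfolding tg_def by blast
  next
    fix \<epsilon> assume "\<epsilon> \<in> edges Y" then show "card {e \<in> edges G. \<epsilon> \<in> path_edges (P' ((\<lambda>v. (n, v)) ` e))} \<le> k"
      using c4 unfolding tg_def by blast
  qed
  have "(\<phi>' \<circ> tg) ` verts G \<union> (\<Union>e\<in>edges G. set (P' (tg ` e))) =
        \<phi>' ` verts (tagG n G) \<union> (\<Union>e\<in>edges (tagG n G). set (P' e))"
    unfolding vT eT by (simp add: image_comp)
  then show "wiring_volume G (\<phi>' \<circ> (\<lambda>v. (n, v))) (\<lambda>e. P' ((\<lambda>v. (n, v)) ` e)) = wiring_volume (tagG n G) \<phi>' P'"
    unfolding wiring_volume_def tg_def by simp
qed

lemma card_vX: "card (verts (Xn f n)) = (2 ^ 2 ^ (2 * n) * f n + 1) * f n"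
  by (simp add: Xn_eq verts_def card_LV)

lemma wir_bound:
  assumes n2: "2 \<le> n" and fb: "\<forall>m\<ge>2. 2 \<le> f m \<and> f m \<le> m" and f1: "f 1 = 1"
  shows "wir_fun (f n - 1) (Xg f) (Yg f) (card (verts (Xn f n))) \<ge> enat (2 ^ 2 ^ (2 * n + 1))"
proof -
  define \<Gamma> where "\<Gamma> = tagG n (Xn f n)"
  have fin: "finite (verts (Xn f n))" "finite (edges (Xn f n))"
    by (simp_all add: Xn_eq verts_def edges_def finite_LV finite_LE)
  have inj: "inj_on (\<lambda>v::nat \<times> nat. (n, v)) (verts (Xn f n))" by (auto simp: inj_on_def)
  have vG: "verts \<Gamma> = (\<lambda>v. (n, v)) ` verts (Xn f n)" by (simp add: \<Gamma>_def tagG_def verts_def)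
  have eG: "edges \<Gamma> = (\<lambda>e. (\<lambda>v. (n, v)) ` e) ` edges (Xn f n)" by (simp add: \<Gamma>_def tagG_def edges_def)
  have sg: "subgraph \<Gamma> (Xg f)"
    unfolding subgraph_def
  proof (intro conjI ballI)
    show "verts \<Gamma> \<subseteq> verts (Xg f)" using n2 unfolding vG by (auto simp: Xg_def dunion_def verts_def)
    show "edges \<Gamma> \<subseteq> edges (Xg f)"
    proof
      fix e assume "e \<in> edges \<Gamma>"
      then obtain e0 where e0: "e0 \<in> edges (Xn f n)" "e = (\<lambda>v. (n, v)) ` e0" using eG by auto
      have "e \<in> {(\<lambda>v. (n', v)) ` e' | n' e'. 1 \<le> n' \<and> e' \<in> edges (Xn f n')}" using e0 n2 by (intro CollectI exI[of _ n] exI[of _ e0]) simp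
      then show "e \<in> edges (Xg f)" by (simp add: Xg_def dunion_def edges_def)
    qed
  next
    fix e assume "e \<in> edges \<Gamma>"
    then obtain e0 where e0: "e0 \<in> edges (Xn f n)" "e = (\<lambda>v. (n, v)) ` e0" using eG by auto
    have "e0 \<subseteq> verts (Xn f n)" using e0(1) LE_sub by (simp add: Xn_eq verts_def edges_def)
    then show "e \<subseteq> verts \<Gamma>" using e0(2) vG by auto
  qed
  have cardG: "card (verts \<Gamma>) = card (verts (Xn f n))" using card_image[OF inj] vG by simp
  have mem: "\<Gamma> \<in> {\<Gamma>. subgraph \<Gamma> (Xg f) \<and> finite (verts \<Gamma>) \<and> card (verts \<Gamma>) \<le> card (verts (Xn f n))}"
    using sg cardG fin vG by simp
  have "enat (2 ^ 2 ^ (2 * n + 1)) \<le> wir (f n - 1) \<Gamma> (Yg f)"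
    unfolding wir_def
  proof (rule INF_greatest)
    fix w assume "w \<in> {(\<phi>, P). coarse_wiring (f n - 1) \<Gamma> (Yg f) \<phi> P}"
    then have cw: "coarse_wiring (f n - 1) (tagG n (Xn f n)) (Yg f) (fst w) (snd w)"
      unfolding \<Gamma>_def by auto
    have "2 * 2 ^ 2 ^ (2 * n + 1) + 1 \<le> wiring_volume (Xn f n) (fst w \<circ> (\<lambda>v. (n, v))) (\<lambda>e. snd w ((\<lambda>v. (n, v)) ` e))"
      using vol_bound[OF n2 fb f1 tag_transfer(1)[OF cw fin]] .
    also have "\<dots> = wiring_volume \<Gamma> (fst w) (snd w)" using tag_transfer(2)[OF cw fin] unfolding \<Gamma>_def .
    finally show "enat (2 ^ 2 ^ (2 * n + 1)) \<le> enat (wiring_volume \<Gamma> (fst w) (snd w))" by simp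
  qed
  also have "\<dots> \<le> wir_fun (f n - 1) (Xg f) (Yg f) (card (verts (Xn f n)))"
    unfolding wir_fun_def using mem by (rule SUP_upper)
  finally show ?thesis .
qed

lemma real_bound:
  assumes F2: "2 \<le> (F::nat)"
  shows "real (2 ^ 2 ^ (2 * n + 1)) \<ge> (real ((2 ^ 2 ^ (2 * n) * F + 1) * F) / real (F * (F + 1))) ^ 2"
proof -
  define L :: nat where "L = 2 ^ 2 ^ (2 * n)"
  have L1: "1 \<le> L" unfolding L_def by simp
  have LL: "(2::nat) ^ 2 ^ (2 * n + 1) = L * L"
  proof -
    have "(2::nat) ^ (2 * n + 1) = 2 ^ (2 * n) + 2 ^ (2 * n)" by simp
    then have "(2::nat) ^ 2 ^ (2 * n + 1) = 2 ^ (2 ^ (2 * n) + 2 ^ (2 * n))" by simp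
    also have "\<dots> = L * L" unfolding L_def by (rule power_add)
    finally show ?thesis .
  qed
  define x where "x = real ((L * F + 1) * F) / real (F * (F + 1))"
  have x0: "0 \<le> x" unfolding x_def by simp
  have "0 < F * (F + 1)" using F2 by simp
  then have pos: "0 < real (F * (F + 1))" by (simp only: of_nat_0_less_iff)
  have "real ((L * F + 1) * F) \<le> real L * real (F * (F + 1))"
  proof -
    have "(L * F + 1) * F \<le> L * (F * (F + 1))"
    proof -
      have "(L * F + 1) * F = L * F * F + F" by (simp add: algebra_simps)
      also have "\<dots> \<le> L * F * F + L * F" using L1 by simp
      also have "\<dots> = L * (F * (F + 1))" by (simp add: algebra_simps)
      finally show ?thesis .
    qed
    then show ?thesis by (metis of_nat_le_iff of_nat_mult)
  qed
  then have xl: "x \<le> real L" unfolding x_def using pos by (simp add: divide_le_eq)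
  have "x ^ 2 \<le> real L ^ 2" using power_mono[OF xl x0] .
  also have "\<dots> = real (2 ^ 2 ^ (2 * n + 1))" using LL by (simp add: power2_eq_square)
  finally show ?thesis unfolding x_def L_def .
qed

theorem lemma3p1:
  fixes f :: "nat \<Rightarrow> nat" and n :: nat
  assumes f_surj: "\<forall>k\<ge>1. \<exists>m\<ge>1. f m = k"
    and f_one: "f 1 = 1"
    and f_bounds: "\<forall>m\<ge>2. 2 \<le> f m \<and> f m \<le> m"
    and f_inf: "\<forall>k\<ge>2. infinite {m. 1 \<le> m \<and> f m = k}"
    and n2: "n \<ge> 2"
  shows "(\<forall>(\<phi> :: nat \<times> nat \<Rightarrow> nat \<times> nat \<times> nat) (P :: (nat \<times> nat) set \<Rightarrow> (nat \<times> nat \<times> nat) list).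
            coarse_wiring (f n - 1) (Xn f n) (Yg f) \<phi> P \<longrightarrow>
            wiring_volume (Xn f n) \<phi> P \<ge> 2 * 2 ^ 2 ^ (2 * n + 1) + 1)
       \<and> card (verts (Xn f n)) = (2 ^ 2 ^ (2 * n) * f n + 1) * f n
       \<and> wir_fun (f n - 1) (Xg f) (Yg f) (card (verts (Xn f n))) \<ge> enat (2 ^ 2 ^ (2 * n + 1))
       \<and> real (2 ^ 2 ^ (2 * n + 1)) \<ge> (real (card (verts (Xn f n))) / real (f n * (f n + 1))) ^ 2"
proof (intro conjI allI impI)
  fix \<phi> :: "nat \<times> nat \<Rightarrow> nat \<times> nat \<times> nat" and P :: "(nat \<times> nat) set \<Rightarrow> (nat \<times> nat \<times> nat) list"
  assume "coarse_wiring (f n - 1) (Xn f n) (Yg f) \<phi> P"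
  then show "wiring_volume (Xn f n) \<phi> P \<ge> 2 * 2 ^ 2 ^ (2 * n + 1) + 1"
    by (rule vol_bound[OF n2 f_bounds f_one])
next
  show "card (verts (Xn f n)) = (2 ^ 2 ^ (2 * n) * f n + 1) * f n" by (rule card_vX)
next
  show "wir_fun (f n - 1) (Xg f) (Yg f) (card (verts (Xn f n))) \<ge> enat (2 ^ 2 ^ (2 * n + 1))"
    by (rule wir_bound[OF n2 f_bounds f_one])
next
  have F2: "2 \<le> f n" using f_bounds n2 by blast
  show "real (2 ^ 2 ^ (2 * n + 1)) \<ge> (real (card (verts (Xn f n))) / real (f n * (f n + 1))) ^ 2"
    unfolding card_vX by (rule real_bound[OF F2])
qed


end
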